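(* Let $Q_{n,m}$ be as defined in the context and let $S$ be a nonzero subspace of $V(Q_{n,m})$. Then every coloring of the induced subgraph $Q_{n,m}|_S$ contains a code of dimension at most $\left\lceil (\dim(S^\perp)+1)/m\right\rceil$, where $S^\perp$ is the orthogonal complement of $S$ in $V(Q_{n,m})$.
   Context: A quantum graph $G$ consists of a finite-dimensional complex inner product space $V(G)$ and a real vector space $E(G)$ of self-adjoint operators on $V(G)$ containing the identity $I$; write $|G|=\dim V(G)$ and $\|G\|=\dim E(G)-1$. A code of $G$ is a subspace $C\subseteq V(G)$ such that there is a function $\epsilon_C:E(G)\to\mathbb{R}$ with $P_CAP_C=\epsilon_C(A)P_C$ for all $A\in E(G)$, where $P_C$ is the orthogonal projection onto $C$. A coloring of $G$ is a set $K$ of codes of $G$ with $\sum_{C\in K}P_C=I$. For a subspace $S\subseteq V(G)$, the induced subgraph $G|_S$ is the quantum graph with $V(G|_S)=S$ and $E(G|_S)=P_SE(G)P_S$ (operators restricted to $S$). Let $n\ge 2$ and $1\le m\le n-1$ be integers. $Q_{n,m}$ denotes any quantum graph with $|Q_{n,m}|=n$, $\|Q_{n,m}\|=m$, such that: (i) $E(Q_{n,m})$ is commutative; (ii) (tropical) $E(Q_{n,m})$ has a basis $\{I,A_1,\dots,A_m\}$ and there is an orthonormal basis of $V(Q_{n,m})$ of common eigenvectors of the $A_i$ such that, writing the eigenvalues of $A_i$ in decreasing order $\lambda_{i,1},\dots,\lambda_{i,n}$ with corresponding common eigenvectors $w_{i,1},\dots,w_{i,n}$, one has $0<\lambda_{i,j+1}<\lambda_{i,j}/n^2$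 for all $i$ and $1\le j<n$; (iii) (cyclical) for $1\le i<m$ and all $j$, $w_{i+1,j}=w_{i,j+s_i}$, with the second index taken modulo $n$ in $\{1,\dots,n\}$, where $s_i=\lfloor n/m\rfloor+1$ if $1\le i\le (n\bmod m)$ and $s_i=\lfloor n/m\rfloor$ otherwise; (iv) the common eigenvectors are enumerated as $w_1,\dots,w_n$ (each common eigenvector exactly once) so that for every $l\in\{1,\dots,n\}$ one has $w_l=w_{i,\lceil l/m\rceil}$ for some $i\in\{1,\dots,m\}$. *)

theory Defs
  imports "Jordan_Normal_Form.VS_Connect" "Jordan_Normal_Form.Conjugate"
begin

(* Ambient space: V = C^n (complex vec of dimension n) with the standard
   inner product  v \<bullet>c w = \<Sum>i. v_i * cnj (w_i).  Operators: n x n complex matrices. *)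

definition csubspace :: "nat \<Rightarrow> complex vec set \<Rightarrow> bool" where
  "csubspace n W \<longleftrightarrow> subspace class_ring W (module_vec TYPE(complex) n)"

definition cdim :: "nat \<Rightarrow> complex vec set \<Rightarrow> nat" where
  "cdim n W = vectorspace.dim class_ring ((module_vec TYPE(complex) n)\<lparr>carrier := W\<rparr>)"

definition perp :: "nat \<Rightarrow> complex vec set \<Rightarrow> complex vec set" where
  "perp n S = {x \<in> carrier_vec n. \<forall>y\<in>S. x \<bullet>c y = 0}"

definition proj :: "nat \<Rightarrow> complex vec set \<Rightarrow> complex mat" where
  "proj n W = (THE P. P \<in> carrier_mat n n \<and>
      (\<forall>v\<in>carrier_vec n. P *\<^sub>v v \<in> W \<and> (\<forall>w\<in>W. (v - P *\<^sub>v v) \<bullet>c w = 0)))"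

definition adj :: "complex mat \<Rightarrow> complex mat" where
  "adj A = mat (dim_col A) (dim_row A) (\<lambda>(i,j). cnj (A $$ (j,i)))"

(* A quantum graph is represented inside C^n: its vertex space is a subspace W of C^n
   and its edge space E is a set of n x n matrices (operators on W, extended by 0 on W^perp);
   the identity of W is then proj n W. *)

definition is_code :: "nat \<Rightarrow> complex vec set \<Rightarrow> complex mat set \<Rightarrow> complex vec set \<Rightarrow> bool" where
  "is_code n W E C \<longleftrightarrow> csubspace n C \<and> C \<subseteq> W \<and>
     (\<exists>\<epsilon> :: complex mat \<Rightarrow> real. \<forall>A\<in>E.
        proj n C * A * proj n C = complex_of_real (\<epsilon> A) \<cdot>\<^sub>m proj n C)"

definition is_coloring :: "nat \<Rightarrow> complex vec set \<Rightarrow> complex mat set \<Rightarrow> complex vec set set \<Rightarrow> bool" where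
  "is_coloring n W E K \<longleftrightarrow> finite K \<and> (\<forall>C\<in>K. is_code n W E C) \<and>
     (\<forall>i<n. \<forall>j<n. (\<Sum>C\<in>K. proj n C $$ (i,j)) = proj n W $$ (i,j))"

definition induced_edges :: "nat \<Rightarrow> complex vec set \<Rightarrow> complex mat set \<Rightarrow> complex mat set" where
  "induced_edges n S E = (\<lambda>A. proj n S * A * proj n S) ` E"

definition lin_comb :: "nat \<Rightarrow> nat \<Rightarrow> (nat \<Rightarrow> complex mat) \<Rightarrow> (nat \<Rightarrow> real) \<Rightarrow> complex mat" where
  "lin_comb n m A c = mat n n (\<lambda>(i,j). complex_of_real (c 0) * (if i = j then 1 else 0)
       + (\<Sum>k\<in>{1..m}. complex_of_real (c k) * A k $$ (i,j)))"

definition edge_space :: "nat \<Rightarrow> nat \<Rightarrow> (nat \<Rightarrow> complex mat) \<Rightarrow> complex mat set" where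
  "edge_space n m A = {lin_comb n m A c | c. True}"

definition shift :: "nat \<Rightarrow> nat \<Rightarrow> nat \<Rightarrow> nat" where
  "shift n m i = (if 1 \<le> i \<and> i \<le> n mod m then n div m + 1 else n div m)"

(* Q_{n,m}: vertex space C^n, edge space = real span of {I, A_1..A_m}, with
   {I, A_1..A_m} a basis (real linear independence), conditions (i)-(iv).
   b : orthonormal basis b 1..b n of common eigenvectors;
   w_{i,j} = b (\<pi> i j) with \<pi> i a permutation of {1..n};  lam i j = \<lambda>_{i,j}. *)
definition is_Q :: "nat \<Rightarrow> nat \<Rightarrow> (nat \<Rightarrow> complex mat) \<Rightarrow> bool" where
  "is_Q n m A \<longleftrightarrow>
     (\<forall>k\<in>{1..m}. A k \<in> carrier_mat n n) \<and>
     (\<forall>X\<in>edge_space n m A. adj X = X) \<and>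
     (\<forall>c. lin_comb n m A c = 0\<^sub>m n n \<longrightarrow> (\<forall>k\<le>m. c k = 0)) \<and>
     (\<forall>X\<in>edge_space n m A. \<forall>Y\<in>edge_space n m A. X * Y = Y * X) \<and>
     (\<exists>(b :: nat \<Rightarrow> complex vec) (\<pi> :: nat \<Rightarrow> nat \<Rightarrow> nat) (lam :: nat \<Rightarrow> nat \<Rightarrow> real).
        (\<forall>j\<in>{1..n}. b j \<in> carrier_vec n) \<and>
        (\<forall>j\<in>{1..n}. \<forall>l\<in>{1..n}. b j \<bullet>c b l = (if j = l then 1 else 0)) \<and>
        (\<forall>i\<in>{1..m}. bij_betw (\<pi> i) {1..n} {1..n}) \<and>
        (\<forall>i\<in>{1..m}. \<forall>j\<in>{1..n}.
            A i *\<^sub>v b (\<pi> i j) = complex_of_real (lam i j) \<cdot>\<^sub>v b (\<pi> i j)) \<and>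
        (\<forall>i\<in>{1..m}. \<forall>j. 1 \<le> j \<and> j < n \<longrightarrow>
            0 < lam i (j+1) \<and> lam i (j+1) < lam i j / (real n)^2) \<and>
        (\<forall>i. 1 \<le> i \<and> i < m \<longrightarrow> (\<forall>j\<in>{1..n}.
            \<pi> (i+1) j = \<pi> i ((j + shift n m i - 1) mod n + 1))) \<and>
        (\<exists>e. bij_betw e {1..n} {1..n} \<and>
            (\<forall>l\<in>{1..n}. \<exists>i\<in>{1..m}. e l = \<pi> i (nat \<lceil>real l / real m\<rceil>))))"

end

theory Submission
  imports Defs "Jordan_Normal_Form.Gram_Schmidt"
begin

lemma cip_sum: fixes x y :: "complex vec" assumes "y \<in> carrier_vec n"
  shows "x \<bullet>c y = (\<Sum>r<n. x$r * cnj (y$r))"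
  using assms by (auto simp: scalar_prod_def lessThan_atLeast0)

definition nsq :: "nat \<Rightarrow> complex vec \<Rightarrow> real" where
  "nsq n x = (\<Sum>r<n. (cmod (x$r))^2)"

lemma nsq_ge0: "nsq n x \<ge> 0" unfolding nsq_def by (auto intro: sum_nonneg)

lemma cip_self: assumes "x \<in> carrier_vec n" shows "x \<bullet>c x = complex_of_real (nsq n x)"
  unfolding cip_sum[OF assms] nsq_def by (simp add: complex_norm_square flip: of_real_power)

lemma nsq_eq0: assumes "x \<in> carrier_vec n" shows "nsq n x = 0 \<longleftrightarrow> x = 0\<^sub>v n"
proof -
  have "nsq n x = 0 \<longleftrightarrow> x \<bullet>c x = 0" using cip_self[OF assms] by simp
  also have "\<dots> \<longleftrightarrow> x = 0\<^sub>v n" using assms by simp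
  finally show ?thesis .
qed

lemma cip_conj: fixes x y :: "complex vec" assumes "x \<in> carrier_vec n" "y \<in> carrier_vec n"
  shows "x \<bullet>c y = cnj (y \<bullet>c x)"
  unfolding cip_sum[OF assms(1)] cip_sum[OF assms(2)] by (simp add: mult.commute)

lemma cip_add_left: fixes x y z :: "complex vec" assumes "x \<in> carrier_vec n" "z \<in> carrier_vec n" "y \<in> carrier_vec n"
  shows "(x + z) \<bullet>c y = x \<bullet>c y + z \<bullet>c y"
  using assms unfolding cip_sum[OF assms(3)] by (simp add: sum.distrib algebra_simps)

lemma cip_minus_left: fixes x y z :: "complex vec" assumes "x \<in> carrier_vec n" "z \<in> carrier_vec n" "y \<in> carrier_vec n"
  shows "(x - z) \<bullet>c y = x \<bullet>c y - z \<bullet>c y"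
  using assms unfolding cip_sum[OF assms(3)] by (simp add: sum_subtractf algebra_simps)

lemma cip_add_right: fixes x y z :: "complex vec" assumes "x \<in> carrier_vec n" "z \<in> carrier_vec n" "y \<in> carrier_vec n"
  shows "y \<bullet>c (x + z) = y \<bullet>c x + y \<bullet>c z"
  using assms unfolding cip_sum[OF assms(1)] cip_sum[OF assms(2)] cip_sum[OF add_carrier_vec[OF assms(1,2)]] 
  by (simp add: sum.distrib algebra_simps)

lemma cip_minus_right: fixes x y z :: "complex vec" assumes "x \<in> carrier_vec n" "z \<in> carrier_vec n" "y \<in> carrier_vec n"
  shows "y \<bullet>c (x - z) = y \<bullet>c x - y \<bullet>c z"
  using assms unfolding cip_sum[OF assms(1)] cip_sum[OF assms(2)] cip_sum[OF minus_carrier_vec[OF assms(1,2)]] 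
  by (simp add: sum_subtractf algebra_simps)

lemma cip_smult_left: fixes x y :: "complex vec" assumes "x \<in> carrier_vec n" "y \<in> carrier_vec n"
  shows "(a \<cdot>\<^sub>v x) \<bullet>c y = a * (x \<bullet>c y)"
  using assms unfolding cip_sum[OF assms(2)] by (simp add: sum_distrib_left algebra_simps)

lemma cip_smult_right: fixes x y :: "complex vec" assumes "x \<in> carrier_vec n" "y \<in> carrier_vec n"
  shows "y \<bullet>c (a \<cdot>\<^sub>v x) = cnj a * (y \<bullet>c x)"
  using assms unfolding cip_sum[OF assms(1)] cip_sum[OF smult_carrier_vec[THEN iffD2, OF assms(1)]] 
  by (simp add: sum_distrib_left algebra_simps)

lemma cip_zero_left: fixes y :: "complex vec" assumes "y \<in> carrier_vec n" shows "0\<^sub>v n \<bullet>c y = 0"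
  using assms unfolding cip_sum[OF assms] by simp

lemma cip_zero_right: fixes y :: "complex vec" assumes "y \<in> carrier_vec n" shows "y \<bullet>c 0\<^sub>v n = 0"
  using assms unfolding cip_sum[of "0\<^sub>v n", OF zero_carrier_vec] by simp

lemma cauchy_schwarz_sq: assumes x: "x \<in> carrier_vec n" and y: "y \<in> carrier_vec n"
  shows "(cmod (x \<bullet>c y))^2 \<le> nsq n x * nsq n y"
proof (cases "y = 0\<^sub>v n")
  case True thus ?thesis using x by (simp add: cip_zero_right nsq_ge0)
next
  case False
  have ny: "nsq n y > 0" using nsq_ge0[of n y] nsq_eq0[OF y] False by linarith
  define t where "t = (x \<bullet>c y) / complex_of_real (nsq n y)"
  define z where "z = x - t \<cdot>\<^sub>v y"
  have z: "z \<in> carrier_vec n" unfolding z_def using x y by auto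
  have zy: "z \<bullet>c y = 0" unfolding z_def
    using x y ny by (simp add: cip_minus_left cip_smult_left cip_self t_def)
  have yz: "y \<bullet>c z = 0" using cip_conj[OF y z] zy by simp
  have xe: "x = z + t \<cdot>\<^sub>v y" unfolding z_def using x y by auto
  have "x \<bullet>c x = z \<bullet>c z + t * cnj t * (y \<bullet>c y)"
    unfolding xe using z y
    by (simp add: cip_add_left cip_add_right cip_smult_left cip_smult_right zy yz algebra_simps)
  hence "complex_of_real (nsq n x) = complex_of_real (nsq n z + (cmod t)^2 * nsq n y)"
    using x y z by (simp add: cip_self complex_norm_square[symmetric])
  hence "nsq n x = nsq n z + (cmod t)^2 * nsq n y" using of_real_eq_iff by blast
  hence "nsq n x \<ge> (cmod t)^2 * nsq n y" using nsq_ge0[of n z] by linarith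
  moreover have "(cmod t)^2 * nsq n y = (cmod (x \<bullet>c y))^2 / nsq n y"
    unfolding t_def using ny by (simp add: norm_divide power_divide power2_eq_square)
  ultimately have "(cmod (x \<bullet>c y))^2 / nsq n y \<le> nsq n x" by simp
  thus ?thesis using ny by (simp add: divide_le_eq mult.commute)
qed

lemma cauchy_schwarz: assumes x: "x \<in> carrier_vec n" and y: "y \<in> carrier_vec n"
  shows "cmod (x \<bullet>c y) \<le> sqrt (nsq n x) * sqrt (nsq n y)"
proof -
  have "cmod (x \<bullet>c y) = sqrt ((cmod (x \<bullet>c y))^2)" by simp
  also have "\<dots> \<le> sqrt (nsq n x * nsq n y)" using cauchy_schwarz_sq[OF x y] by (rule real_sqrt_le_mono)
  finally show ?thesis by (simp add: real_sqrt_mult)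
qed

lemma csub_props: assumes "csubspace n W"
  shows "W \<subseteq> carrier_vec n" "0\<^sub>v n \<in> W"
    "\<And>x y. x \<in> W \<Longrightarrow> y \<in> W \<Longrightarrow> x + y \<in> W"
    "\<And>x a. x \<in> W \<Longrightarrow> a \<cdot>\<^sub>v x \<in> W"
  using assms unfolding csubspace_def subspace_def submodule_def
  by (auto simp: module_vec_simps)

lemma csub_minus: assumes "csubspace n W" "x \<in> W" "y \<in> W" shows "x - y \<in> W"
proof -
  have "x - y = x + (-1) \<cdot>\<^sub>v y" using assms csub_props(1)[OF assms(1)] by auto
  thus ?thesis using csub_props[OF assms(1)] assms by auto
qed

lemma csubI: assumes "W \<subseteq> carrier_vec n" "0\<^sub>v n \<in> W"
    "\<And>x y. x \<in> W \<Longrightarrow> y \<in> W \<Longrightarrow> x + y \<in> W"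
    "\<And>x a. x \<in> W \<Longrightarrow> a \<cdot>\<^sub>v x \<in> W"
  shows "csubspace n W"
  using assms vec_vs[of n] vec_module[of n] unfolding csubspace_def subspace_def submodule_def
  by (auto simp: module_vec_simps)

abbreviation "cspan n \<equiv> LinearCombinations.module.span (class_ring :: complex ring) (module_vec TYPE(complex) n)"
abbreviation "clindep n \<equiv> LinearCombinations.module.lin_dep (class_ring :: complex ring) (module_vec TYPE(complex) n)"

lemma sub_basis: assumes W: "csubspace n W"
  shows "\<exists>B. finite B \<and> B \<subseteq> W \<and> \<not> clindep n B \<and> 
     cspan n B = W \<and> card B = cdim n W \<and>
     vectorspace class_ring ((module_vec TYPE(complex) n)\<lparr>carrier := W\<rparr>) \<and>
     vectorspace.fin_dim class_ring ((module_vec TYPE(complex) n)\<lparr>carrier := W\<rparr>)"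
proof -
  interpret V: vec_space "TYPE(complex)" n .
  have sub: "subspace class_ring W V.V" using W unfolding csubspace_def by simp
  have submod: "submodule class_ring W V.V" using sub unfolding subspace_def by simp
  interpret Wv: vectorspace class_ring "V.vs W" using V.subspace_is_vs[OF sub] .
  have ld: "Wv.lin_dep S = V.lin_dep S" if "S \<subseteq> W" for S
    using V.span_li_not_depend(2)[OF that submod] by simp
  have sp: "Wv.span S = V.span S" if "S \<subseteq> W" for S
    using V.span_li_not_depend(1)[OF that submod] by simp
  have WC: "W \<subseteq> carrier_vec n" using csub_props(1)[OF W] .
  let ?P = "\<lambda>S. S \<subseteq> carrier (V.vs W) \<and> \<not> Wv.lin_dep S"
  have bnd: "finite S \<and> card S \<le> n" if "?P S" for S
  proof -
    have "S \<subseteq> carrier_vec n" "\<not> V.lin_dep S" using that ld WC by auto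
    thus ?thesis using V.li_le_dim[OF V.fin_dim] V.dim_is_n by auto
  qed
  have P0: "?P {}" by (simp add: Wv.lin_dep_def)
  obtain B where B: "finite B" "maximal B ?P" using maximal_exists[of ?P n "{}", OF bnd P0] by blast
  have gen: "Wv.span B = W" using Wv.max_li_is_gen[OF B(2)] by simp
  have PB: "?P B" using B(2) unfolding maximal_def by blast
  have bas: "Wv.basis B" using Wv.max_li_is_basis[OF B(2)] .
  have fd: "Wv.fin_dim" unfolding Wv.fin_dim_def using B(1) PB gen by auto
  have dimB: "Wv.dim = card B" using Wv.dim_basis[OF B(1) bas] .
  have BW: "B \<subseteq> W" using PB by simp
  show ?thesis
    apply (rule exI[of _ B])
    using B(1) BW PB ld[OF BW] gen sp[OF BW] dimB fd Wv.vectorspace_axioms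
    unfolding cdim_def by auto
qed

lemma proj_exists: assumes W: "csubspace n W"
  shows "\<exists>P. P \<in> carrier_mat n n \<and> (\<forall>v\<in>carrier_vec n. P *\<^sub>v v \<in> W \<and> (\<forall>w\<in>W. (v - P *\<^sub>v v) \<bullet>c w = 0))"
proof -
  interpret V: cof_vec_space n "TYPE(complex)" .
  obtain B where B: "finite B" "B \<subseteq> W" "\<not> clindep n B" "cspan n B = W"
    using sub_basis[OF W] by blast
  have WC: "W \<subseteq> carrier_vec n" using csub_props(1)[OF W] .
  obtain ws where ws: "set ws = B" "distinct ws" using finite_distinct_list[OF B(1)] by blast
  define us where "us = gram_schmidt n ws"
  have wsC: "set ws \<subseteq> carrier_vec n" using ws B WC by auto
  note gs = V.gram_schmidt_result[OF wsC ws(2) _ us_def]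
  have sp: "V.span (set us) = W" using gs(1) B(3,4) ws(1) by simp
  have orth: "corthogonal us" using gs(2) B(3) ws(1) by simp
  have usC: "set us \<subseteq> carrier_vec n" using gs(3) B(3) ws(1) by simp
  have usCk: "us ! k \<in> carrier_vec n" if "k < length us" for k using usC that by auto
  have LC: "V.lincomb_list c us $ r = (\<Sum>k<length us. c k * us ! k $ r)" if "r < n" for c r
  proof -
    have "V.lincomb_list c us $ r = sum_list (map (\<lambda>x. x $ r) (map (\<lambda>i. c i \<cdot>\<^sub>v us ! i) [0..<length us]))"
      unfolding V.lincomb_list_def
      by (rule V.sumlist_vec_index, insert usCk that, auto)
    also have "\<dots> = (\<Sum>k<length us. c k * us ! k $ r)"
      by (simp add: sum_set_upt_conv_sum_list_nat[symmetric] lessThan_atLeast0 o_def,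
          rule sum.cong, auto simp: usCk[THEN carrier_vecD] that)
    finally show ?thesis .
  qed
  have LCc: "V.lincomb_list c us \<in> carrier_vec n" for c
    by (rule V.lincomb_list_carrier, insert usC, auto)
  define d where "d k = us ! k \<bullet>c us ! k" for k
  have d0: "d k \<noteq> 0" if "k < length us" for k using corthogonalD[OF orth that that] d_def by auto
  have ortho: "us ! k \<bullet>c us ! j = 0" if "k < length us" "j < length us" "k \<noteq> j" for k j
    using corthogonalD[OF orth that(1,2)] that(3) by auto
  define Pm where "Pm = mat n n (\<lambda>(r,s). \<Sum>k<length us. us!k$r * cnj(us!k$s) / d k)"
  define cf where "cf v k = (v \<bullet>c us ! k) / d k" for v k
  have Pv: "Pm *\<^sub>v v = V.lincomb_list (cf v) us" if v: "v \<in> carrier_vec n" for v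
  proof (rule eq_vecI)
    show "dim_vec (Pm *\<^sub>v v) = dim_vec (V.lincomb_list (cf v) us)" using LCc[of "cf v", THEN carrier_vecD] by (simp add: Pm_def)
    fix r assume "r < dim_vec (V.lincomb_list (cf v) us)"
    hence r: "r < n" using LCc[of "cf v", THEN carrier_vecD] by simp
    have "(Pm *\<^sub>v v) $ r = (\<Sum>s<n. (\<Sum>k<length us. us!k$r * cnj(us!k$s) / d k) * v $ s)"
      using r v by (simp add: Pm_def scalar_prod_def lessThan_atLeast0)
    also have "\<dots> = (\<Sum>k<length us. (\<Sum>s<n. v $ s * cnj(us!k$s)) / d k * us ! k $ r)"
      by (simp add: sum_distrib_left sum_distrib_right sum_divide_distrib algebra_simps sum.swap[of _ "{..<n}"])
    also have "\<dots> = V.lincomb_list (cf v) us $ r"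
      unfolding LC[OF r] cf_def by (rule sum.cong, simp, subst cip_sum[OF usCk], auto)
    finally show "(Pm *\<^sub>v v) $ r = V.lincomb_list (cf v) us $ r" .
  qed
  have inspan: "V.lincomb_list c us \<in> W" for c
  proof -
    have "V.lincomb_list c us \<in> V.span_list us" by (rule V.in_span_listI, auto)
    thus ?thesis using V.span_list_as_span[OF usC] sp by auto
  qed
  have orth1: "(v - Pm *\<^sub>v v) \<bullet>c us ! j = 0" if v: "v \<in> carrier_vec n" and j: "j < length us" for v j
  proof -
    have "(Pm *\<^sub>v v) \<bullet>c us ! j = (\<Sum>r<n. (\<Sum>k<length us. cf v k * us ! k $ r) * cnj (us ! j $ r))"
      unfolding Pv[OF v] using usCk[OF j] by (simp add: cip_sum LC)
    also have "\<dots> = (\<Sum>k<length us. cf v k * (us ! k \<bullet>c us ! j))"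
      using usCk[OF j] by (simp add: cip_sum sum_distrib_left sum_distrib_right algebra_simps sum.swap[of _ "{..<n}"])
    also have "\<dots> = (\<Sum>k\<in>{j}. cf v k * (us ! k \<bullet>c us ! j))"
      by (rule sum.mono_neutral_right, insert j ortho, auto)
    also have "\<dots> = v \<bullet>c us ! j" using d0[OF j] by (simp add: cf_def d_def)
    finally show ?thesis using v usCk[OF j] LCc Pv[OF v] by (simp add: cip_minus_left)
  qed
  show ?thesis
  proof (intro exI[of _ Pm] conjI ballI)
    show "Pm \<in> carrier_mat n n" by (simp add: Pm_def)
    fix v :: "complex vec" assume v: "v \<in> carrier_vec n"
    show "Pm *\<^sub>v v \<in> W" using Pv[OF v] inspan by simp
    fix w assume w: "w \<in> W"
    then obtain a where a: "w = V.lincomb_list a us"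
      using V.span_list_as_span[OF usC] sp by (auto elim: V.in_span_listE)
    have vP: "v - Pm *\<^sub>v v \<in> carrier_vec n" using v by (intro minus_carrier_vec mult_mat_vec_carrier, auto simp: Pm_def)
    have "(v - Pm *\<^sub>v v) \<bullet>c w = (\<Sum>r<n. (v - Pm *\<^sub>v v) $ r * cnj (\<Sum>k<length us. a k * us ! k $ r))"
      unfolding a by (subst cip_sum[OF LCc], rule sum.cong, auto simp: LC)
    also have "\<dots> = (\<Sum>k<length us. cnj (a k) * (\<Sum>r<n. (v - Pm *\<^sub>v v) $ r * cnj (us ! k $ r)))"
      by (simp add: sum_distrib_left sum_distrib_right algebra_simps sum.swap[of _ "{..<n}"])
    also have "\<dots> = (\<Sum>k<length us. cnj (a k) * ((v - Pm *\<^sub>v v) \<bullet>c us ! k))"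
      by (rule sum.cong, auto simp: cip_sum[OF usCk])
    also have "\<dots> = 0" using orth1[OF v] by simp
    finally show "(v - Pm *\<^sub>v v) \<bullet>c w = 0" .
  qed
qed

lemma vec_eqI_n: fixes a b :: "'a vec" assumes "a \<in> carrier_vec n" "b \<in> carrier_vec n" "\<And>i. i < n \<Longrightarrow> a $ i = b $ i"
  shows "a = b"
  using assms by (intro eq_vecI, auto)

lemma vec_minus0: fixes a b :: "complex vec" assumes "a \<in> carrier_vec n" "b \<in> carrier_vec n" "a - b = 0\<^sub>v n"
  shows "a = b"
proof (rule vec_eqI_n[OF assms(1,2)])
  fix i assume i: "i < n"
  have "(a - b) $ i = 0" using assms(3) i by simp
  moreover have "dim_vec b = n" using assms(2) by (rule carrier_vecD)
  hence "(a - b) $ i = a $ i - b $ i" using i by simp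
  ultimately show "a $ i = b $ i" by simp
qed

lemma vec_add_diff: fixes a b :: "complex vec" assumes a: "a \<in> carrier_vec n" and b: "b \<in> carrier_vec n"
  shows "a = b + (a - b)"
proof (rule vec_eqI_n[of _ n])
  show "a \<in> carrier_vec n" by fact
  show "b + (a - b) \<in> carrier_vec n" using a b by auto
  fix i assume i: "i < n"
  have "dim_vec a = n" "dim_vec b = n" using carrier_vecD a b by blast+
  thus "a $ i = (b + (a - b)) $ i" using i by simp
qed

lemma mat_unit_entry: fixes A :: "complex mat" assumes A: "A \<in> carrier_mat n n" and i: "i < n" and j: "j < n"
  shows "(A *\<^sub>v unit_vec n j) $ i = A $$ (i,j)"
proof -
  have "(A *\<^sub>v unit_vec n j) $ i = row A i \<bullet> unit_vec n j" using A i by simp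
  also have "\<dots> = row A i $ j" by (rule scalar_prod_right_unit, insert A j, auto)
  also have "\<dots> = A $$ (i,j)" using A i j by simp
  finally show ?thesis .
qed

definition projP :: "nat \<Rightarrow> complex vec set \<Rightarrow> complex mat \<Rightarrow> bool" where
  "projP n W P \<longleftrightarrow> P \<in> carrier_mat n n \<and> (\<forall>v\<in>carrier_vec n. P *\<^sub>v v \<in> W \<and> (\<forall>w\<in>W. (v - P *\<^sub>v v) \<bullet>c w = 0))"

lemma projP_unique: assumes W: "csubspace n W" and P: "projP n W P" and Q: "projP n W Q"
  shows "P = Q"
proof -
  have WC: "W \<subseteq> carrier_vec n" using csub_props(1)[OF W] .
  have Pall: "\<forall>v\<in>carrier_vec n. P *\<^sub>v v \<in> W \<and> (\<forall>w\<in>W. (v - P *\<^sub>v v) \<bullet>c w = 0)"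
    using P unfolding projP_def by (rule conjunct2)
  have Qall: "\<forall>v\<in>carrier_vec n. Q *\<^sub>v v \<in> W \<and> (\<forall>w\<in>W. (v - Q *\<^sub>v v) \<bullet>c w = 0)"
    using Q unfolding projP_def by (rule conjunct2)
  have eqv: "P *\<^sub>v v = Q *\<^sub>v v" if v: "v \<in> carrier_vec n" for v
  proof -
    note Pv1 = Pall[rule_format, OF v] and Qv1 = Qall[rule_format, OF v]
    have Pv: "P *\<^sub>v v \<in> W" using Pv1 by (rule conjunct1)
    have Qv: "Q *\<^sub>v v \<in> W" using Qv1 by (rule conjunct1)
    define d where "d = P *\<^sub>v v - Q *\<^sub>v v"
    have dW: "d \<in> W" unfolding d_def using csub_minus[OF W Pv Qv] .
    have dC: "d \<in> carrier_vec n" using dW WC by auto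
    have PC: "P *\<^sub>v v \<in> carrier_vec n" "Q *\<^sub>v v \<in> carrier_vec n" using Pv Qv WC by auto
    have e1: "(v - P *\<^sub>v v) \<bullet>c d = 0" "(v - Q *\<^sub>v v) \<bullet>c d = 0" 
      using Pv1 Qv1 dW by blast+
    have dims: "dim_vec v = n" "dim_vec (P *\<^sub>v v) = n" "dim_vec (Q *\<^sub>v v) = n" using carrier_vecD v PC by blast+
    have "d = (v - Q *\<^sub>v v) - (v - P *\<^sub>v v)"
    proof (rule vec_eqI_n[of _ n])
      show "d \<in> carrier_vec n" by (rule dC)
      show "(v - Q *\<^sub>v v) - (v - P *\<^sub>v v) \<in> carrier_vec n" using v PC by auto
      fix i assume i: "i < n"
      show "d $ i = ((v - Q *\<^sub>v v) - (v - P *\<^sub>v v)) $ i" unfolding d_def using i dims by simp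
    qed
    hence "d \<bullet>c d = ((v - Q *\<^sub>v v) - (v - P *\<^sub>v v)) \<bullet>c d" by simp
    also have "\<dots> = (v - Q *\<^sub>v v) \<bullet>c d - (v - P *\<^sub>v v) \<bullet>c d"
      by (rule cip_minus_left, insert v PC dC, auto)
    finally have "d \<bullet>c d = (v - Q *\<^sub>v v) \<bullet>c d - (v - P *\<^sub>v v) \<bullet>c d" .
    hence "d \<bullet>c d = 0" using e1 by simp
    hence "d = 0\<^sub>v n" using dC by simp
    thus ?thesis unfolding d_def using PC vec_minus0 by blast
  qed
  have PQc: "P \<in> carrier_mat n n" "Q \<in> carrier_mat n n" 
    using P Q unfolding projP_def by (simp_all only:)
  show ?thesis
  proof (rule eq_matI)
    fix i j assume ij: "i < dim_row Q" "j < dim_col Q"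
    hence ij': "i < n" "j < n" using PQc by auto
    show "P $$ (i,j) = Q $$ (i,j)"
      using mat_unit_entry[OF PQc(1) ij'] mat_unit_entry[OF PQc(2) ij'] eqv[of "unit_vec n j"] by simp
  qed (insert PQc, auto)
qed

lemma proj_spec: assumes W: "csubspace n W" shows "projP n W (proj n W)"
proof -
  obtain P where P: "projP n W P" using proj_exists[OF W] unfolding projP_def by blast
  have "projP n W (THE P. projP n W P)"
    by (rule theI[of "projP n W", OF P], rule projP_unique[OF W _ P], simp)
  thus ?thesis unfolding proj_def projP_def by simp
qed

lemma proj_carrier: "csubspace n W \<Longrightarrow> proj n W \<in> carrier_mat n n"
  using proj_spec unfolding projP_def by (rule conjunct1)

lemma proj_all: "csubspace n W \<Longrightarrow> \<forall>v\<in>carrier_vec n. proj n W *\<^sub>v v \<in> W \<and> (\<forall>w\<in>W. (v - proj n W *\<^sub>v v) \<bullet>c w = 0)"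
  using proj_spec unfolding projP_def by (rule conjunct2)

lemma proj_in: "csubspace n W \<Longrightarrow> v \<in> carrier_vec n \<Longrightarrow> proj n W *\<^sub>v v \<in> W"
  using proj_all by (metis (no_types, lifting))

lemma proj_vC: "csubspace n W \<Longrightarrow> v \<in> carrier_vec n \<Longrightarrow> proj n W *\<^sub>v v \<in> carrier_vec n"
  using proj_carrier mult_mat_vec_carrier by blast

lemma proj_orth: "csubspace n W \<Longrightarrow> v \<in> carrier_vec n \<Longrightarrow> w \<in> W \<Longrightarrow> (v - proj n W *\<^sub>v v) \<bullet>c w = 0"
  using proj_all by (metis (no_types, lifting))

lemma proj_orth': assumes W: "csubspace n W" and v: "v \<in> carrier_vec n" and w: "w \<in> W"
  shows "v \<bullet>c w = (proj n W *\<^sub>v v) \<bullet>c w"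
  using proj_orth[OF W v w] v w csub_props(1)[OF W] proj_vC[OF W v] by (auto simp: cip_minus_left)

lemma proj_fix: assumes W: "csubspace n W" and w: "w \<in> W" shows "proj n W *\<^sub>v w = w"
proof -
  have WC: "W \<subseteq> carrier_vec n" using csub_props(1)[OF W] .
  have wC: "w \<in> carrier_vec n" using w WC by auto
  define d where "d = w - proj n W *\<^sub>v w"
  have dW: "d \<in> W" unfolding d_def by (rule csub_minus[OF W w proj_in[OF W wC]])
  have dC: "d \<in> carrier_vec n" using dW WC by auto
  have "d \<bullet>c d = 0" unfolding d_def by (rule proj_orth[OF W wC], fold d_def, rule dW)
  hence "d = 0\<^sub>v n" using dC by simp
  thus ?thesis unfolding d_def using wC proj_vC[OF W wC] vec_minus0 by metis
qed

lemma proj_sa: assumes W: "csubspace n W" and v: "v \<in> carrier_vec n" and y: "y \<in> carrier_vec n"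
  shows "(proj n W *\<^sub>v v) \<bullet>c y = (proj n W *\<^sub>v v) \<bullet>c (proj n W *\<^sub>v y)"
    and "v \<bullet>c (proj n W *\<^sub>v y) = (proj n W *\<^sub>v v) \<bullet>c (proj n W *\<^sub>v y)"
proof -
  let ?P = "proj n W"
  have a: "y \<bullet>c (?P *\<^sub>v v) = (?P *\<^sub>v y) \<bullet>c (?P *\<^sub>v v)" by (rule proj_orth'[OF W y proj_in[OF W v]])
  show "(?P *\<^sub>v v) \<bullet>c y = (?P *\<^sub>v v) \<bullet>c (?P *\<^sub>v y)"
    using a cip_conj[OF proj_vC[OF W v] y] cip_conj[OF proj_vC[OF W v] proj_vC[OF W y]] by simp
  show "v \<bullet>c (?P *\<^sub>v y) = (?P *\<^sub>v v) \<bullet>c (?P *\<^sub>v y)" by (rule proj_orth'[OF W v proj_in[OF W y]])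
qed

lemma proj_selfadj: assumes W: "csubspace n W" and v: "v \<in> carrier_vec n" and y: "y \<in> carrier_vec n"
  shows "(proj n W *\<^sub>v v) \<bullet>c y = v \<bullet>c (proj n W *\<^sub>v y)"
  using proj_sa[OF W v y] by simp

lemma proj_nsq: assumes W: "csubspace n W" and v: "v \<in> carrier_vec n"
  shows "(proj n W *\<^sub>v v) \<bullet>c v = complex_of_real (nsq n (proj n W *\<^sub>v v))"
  using proj_sa(1)[OF W v v] cip_self[OF proj_vC[OF W v]] by simp

lemma proj_nsq_le: assumes W: "csubspace n W" and v: "v \<in> carrier_vec n"
  shows "nsq n (proj n W *\<^sub>v v) \<le> nsq n v"
proof -
  let ?p = "proj n W *\<^sub>v v"
  have pC: "?p \<in> carrier_vec n" using proj_vC[OF W v] .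
  define y where "y = v - ?p"
  have yC: "y \<in> carrier_vec n" unfolding y_def using v pC by auto
  have yp: "y \<bullet>c ?p = 0" unfolding y_def by (rule proj_orth[OF W v proj_in[OF W v]])
  have py: "?p \<bullet>c y = 0" using cip_conj[OF pC yC] yp by simp
  have ve: "v = ?p + y" unfolding y_def by (rule vec_add_diff[OF v pC])
  have "v \<bullet>c v = ?p \<bullet>c ?p + y \<bullet>c y"
    by (subst (1 2) ve, insert pC yC yp py, simp add: cip_add_left cip_add_right)
  hence "complex_of_real (nsq n v) = complex_of_real (nsq n ?p + nsq n y)"
    using v pC yC by (simp add: cip_self)
  hence "nsq n v = nsq n ?p + nsq n y" using of_real_eq_iff by blast
  thus ?thesis using nsq_ge0[of n y] by linarith
qed

lemma onb_expand:
  fixes f :: "nat \<Rightarrow> complex vec"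
  assumes fC: "\<And>j. j < n \<Longrightarrow> f j \<in> carrier_vec n"
    and on: "\<And>j k. j < n \<Longrightarrow> k < n \<Longrightarrow> f j \<bullet>c f k = (if j = k then 1 else 0)"
    and x: "x \<in> carrier_vec n" and r: "r < n"
  shows "x $ r = (\<Sum>j<n. (x \<bullet>c f j) * f j $ r)"
proof -
  define B where "B = mat n n (\<lambda>(r,j). f j $ r)"
  define Bh where "Bh = mat n n (\<lambda>(j,r). cnj (f j $ r))"
  have BC: "B \<in> carrier_mat n n" "Bh \<in> carrier_mat n n" unfolding B_def Bh_def by auto
  have "Bh * B = 1\<^sub>m n"
  proof (rule eq_matI)
    fix j k assume jk: "j < dim_row (1\<^sub>m n :: complex mat)" "k < dim_col (1\<^sub>m n :: complex mat)"
    hence jk': "j < n" "k < n" by auto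
    have "(Bh * B) $$ (j,k) = (\<Sum>r<n. cnj (f j $ r) * f k $ r)"
      using jk' unfolding B_def Bh_def by (simp add: scalar_prod_def lessThan_atLeast0)
    also have "\<dots> = f k \<bullet>c f j" using fC[OF jk'(1)] by (simp add: cip_sum mult.commute)
    also have "\<dots> = 1\<^sub>m n $$ (j,k)" using on[OF jk'(2,1)] jk' by auto
    finally show "(Bh * B) $$ (j,k) = 1\<^sub>m n $$ (j,k)" .
  qed (insert BC, auto)
  hence BB: "B * Bh = 1\<^sub>m n" using mat_mult_left_right_inverse[OF BC(2,1)] by simp
  have ent: "(\<Sum>j<n. f j $ r * cnj (f j $ s)) = (if r = s then 1 else 0)" if s: "s < n" for s
  proof -
    have "(B * Bh) $$ (r,s) = (\<Sum>j<n. f j $ r * cnj (f j $ s))"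
      using r s unfolding B_def Bh_def by (simp add: scalar_prod_def lessThan_atLeast0)
    thus ?thesis using BB r s by simp
  qed
  have "(\<Sum>j<n. (x \<bullet>c f j) * f j $ r) = (\<Sum>j<n. (\<Sum>s<n. x $ s * cnj (f j $ s)) * f j $ r)"
  proof (rule sum.cong, simp)
    fix j assume "j \<in> {..<n}"
    hence "f j \<in> carrier_vec n" using fC by simp
    thus "(x \<bullet>c f j) * f j $ r = (\<Sum>s<n. x $ s * cnj (f j $ s)) * f j $ r" by (simp only: cip_sum)
  qed
  also have "\<dots> = (\<Sum>j<n. \<Sum>s<n. x $ s * (f j $ r * cnj (f j $ s)))"
    by (simp add: sum_distrib_left sum_distrib_right mult_ac)
  also have "\<dots> = (\<Sum>s<n. \<Sum>j<n. x $ s * (f j $ r * cnj (f j $ s)))"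
    by (rule sum.swap)
  also have "\<dots> = (\<Sum>s<n. x $ s * (\<Sum>j<n. f j $ r * cnj (f j $ s)))"
    by (simp add: sum_distrib_left)
  also have "\<dots> = (\<Sum>s<n. x $ s * (if r = s then 1 else 0))"
    by (rule sum.cong, auto simp: ent)
  also have "\<dots> = (\<Sum>s<n. if s = r then x $ r else 0)" by (rule sum.cong, auto)
  also have "\<dots> = x $ r" using r by simp
  finally show ?thesis by simp
qed

lemma onb_nsq:
  fixes f :: "nat \<Rightarrow> complex vec"
  assumes fC: "\<And>j. j < n \<Longrightarrow> f j \<in> carrier_vec n"
    and on: "\<And>j k. j < n \<Longrightarrow> k < n \<Longrightarrow> f j \<bullet>c f k = (if j = k then 1 else 0)"
    and x: "x \<in> carrier_vec n"
  shows "nsq n x = (\<Sum>j<n. (cmod (x \<bullet>c f j))^2)"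
proof -
  have "x \<bullet>c x = (\<Sum>r<n. x $ r * cnj (\<Sum>j<n. (x \<bullet>c f j) * f j $ r))"
    unfolding cip_sum[OF x] by (rule sum.cong, simp, subst onb_expand[OF fC on x], auto)
  also have "\<dots> = (\<Sum>r<n. \<Sum>j<n. cnj (x \<bullet>c f j) * (x $ r * cnj (f j $ r)))"
    by (simp add: sum_distrib_left sum_distrib_right mult_ac)
  also have "\<dots> = (\<Sum>j<n. \<Sum>r<n. cnj (x \<bullet>c f j) * (x $ r * cnj (f j $ r)))"
    by (rule sum.swap)
  also have "\<dots> = (\<Sum>j<n. cnj (x \<bullet>c f j) * (\<Sum>r<n. x $ r * cnj (f j $ r)))"
    by (simp add: sum_distrib_left)
  also have "\<dots> = (\<Sum>j<n. cnj (x \<bullet>c f j) * (x \<bullet>c f j))"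
  proof (rule sum.cong, simp)
    fix j assume "j \<in> {..<n}"
    hence "f j \<in> carrier_vec n" using fC by simp
    thus "cnj (x \<bullet>c f j) * (\<Sum>r<n. x $ r * cnj (f j $ r)) = cnj (x \<bullet>c f j) * (x \<bullet>c f j)" by (simp only: cip_sum)
  qed
  also have "\<dots> = complex_of_real (\<Sum>j<n. (cmod (x \<bullet>c f j))^2)"
    by (simp add: complex_norm_square mult.commute flip: of_real_power)
  finally show ?thesis using cip_self[OF x] of_real_eq_iff by metis
qed

lemma onb_quad:
  fixes f :: "nat \<Rightarrow> complex vec" and A :: "complex mat"
  assumes fC: "\<And>j. j < n \<Longrightarrow> f j \<in> carrier_vec n"
    and on: "\<And>j k. j < n \<Longrightarrow> k < n \<Longrightarrow> f j \<bullet>c f k = (if j = k then 1 else 0)"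
    and A: "A \<in> carrier_mat n n"
    and eig: "\<And>j. j < n \<Longrightarrow> A *\<^sub>v f j = complex_of_real (lam j) \<cdot>\<^sub>v f j"
    and x: "x \<in> carrier_vec n"
  shows "(A *\<^sub>v x) \<bullet>c x = complex_of_real (\<Sum>j<n. lam j * (cmod (x \<bullet>c f j))^2)"
proof -
  have Ax: "(A *\<^sub>v x) $ r = (\<Sum>j<n. (x \<bullet>c f j) * lam j * f j $ r)" if r: "r < n" for r
  proof -
    have "(A *\<^sub>v x) $ r = (\<Sum>s<n. A $$ (r,s) * x $ s)"
      using A r x by (simp add: scalar_prod_def lessThan_atLeast0)
    also have "\<dots> = (\<Sum>s<n. A $$ (r,s) * (\<Sum>j<n. (x \<bullet>c f j) * f j $ s))"
      by (rule sum.cong, simp, subst onb_expand[OF fC on x], auto)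
    also have "\<dots> = (\<Sum>s<n. \<Sum>j<n. (x \<bullet>c f j) * (A $$ (r,s) * f j $ s))"
      by (simp add: sum_distrib_left sum_distrib_right mult_ac)
    also have "\<dots> = (\<Sum>j<n. \<Sum>s<n. (x \<bullet>c f j) * (A $$ (r,s) * f j $ s))"
      by (rule sum.swap)
    also have "\<dots> = (\<Sum>j<n. (x \<bullet>c f j) * (\<Sum>s<n. A $$ (r,s) * f j $ s))"
      by (simp add: sum_distrib_left)
    also have "\<dots> = (\<Sum>j<n. (x \<bullet>c f j) * (A *\<^sub>v f j) $ r)"
    proof (rule sum.cong, simp)
      fix j assume j: "j \<in> {..<n}"
      have "(A *\<^sub>v f j) $ r = (\<Sum>s<n. A $$ (r,s) * f j $ s)"
        using A r fC[of j] j by (simp add: scalar_prod_def lessThan_atLeast0)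
      thus "(x \<bullet>c f j) * (\<Sum>s<n. A $$ (r,s) * f j $ s) = (x \<bullet>c f j) * (A *\<^sub>v f j) $ r" by simp
    qed
    also have "\<dots> = (\<Sum>j<n. (x \<bullet>c f j) * lam j * f j $ r)"
    proof (rule sum.cong, simp)
      fix j assume j: "j \<in> {..<n}"
      have "dim_vec (f j) = n" using fC[of j] j carrier_vecD by blast
      thus "(x \<bullet>c f j) * (A *\<^sub>v f j) $ r = (x \<bullet>c f j) * lam j * f j $ r"
        using eig[of j] j r by simp
    qed
    finally show ?thesis .
  qed
  have AxC: "A *\<^sub>v x \<in> carrier_vec n" using A x by auto
  have "(A *\<^sub>v x) \<bullet>c x = (\<Sum>r<n. (\<Sum>j<n. (x \<bullet>c f j) * lam j * f j $ r) * cnj (x $ r))"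
    unfolding cip_sum[OF x] by (rule sum.cong, auto simp: Ax)
  also have "\<dots> = (\<Sum>r<n. \<Sum>j<n. (x \<bullet>c f j) * lam j * (f j $ r * cnj (x $ r)))"
    by (simp add: sum_distrib_left sum_distrib_right mult_ac)
  also have "\<dots> = (\<Sum>j<n. \<Sum>r<n. (x \<bullet>c f j) * lam j * (f j $ r * cnj (x $ r)))"
    by (rule sum.swap)
  also have "\<dots> = (\<Sum>j<n. (x \<bullet>c f j) * lam j * (\<Sum>r<n. f j $ r * cnj (x $ r)))"
    by (simp add: sum_distrib_left)
  also have "\<dots> = (\<Sum>j<n. (x \<bullet>c f j) * lam j * cnj (x \<bullet>c f j))"
  proof (rule sum.cong, simp)
    fix j assume j: "j \<in> {..<n}"
    have "(\<Sum>r<n. f j $ r * cnj (x $ r)) = f j \<bullet>c x" by (simp add: cip_sum[OF x])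
    also have "\<dots> = cnj (x \<bullet>c f j)" using cip_conj[OF fC x] j by simp
    finally show "(x \<bullet>c f j) * lam j * (\<Sum>r<n. f j $ r * cnj (x $ r)) = (x \<bullet>c f j) * lam j * cnj (x \<bullet>c f j)" by simp
  qed
  also have "\<dots> = complex_of_real (\<Sum>j<n. lam j * (cmod (x \<bullet>c f j))^2)"
    by (simp add: complex_norm_square algebra_simps flip: of_real_power)
  finally show ?thesis .
qed

lemma cdim_le_gen: assumes W: "csubspace n W" and G: "finite G" "G \<subseteq> W" "cspan n G = W"
  shows "cdim n W \<le> card G"
proof -
  interpret V: vec_space "TYPE(complex)" n .
  have sub: "subspace class_ring W V.V" using W unfolding csubspace_def by simp
  have submod: "submodule class_ring W V.V" using sub unfolding subspace_def by simp
  interpret Wv: vectorspace class_ring "V.vs W" using V.subspace_is_vs[OF sub] .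
  have "Wv.span G = V.span G" using V.span_li_not_depend(1)[OF G(2) submod] by simp
  hence "Wv.gen_set G" using G(3) by simp
  thus ?thesis using Wv.gen_ge_dim[OF G(1)] G(2) unfolding cdim_def by simp
qed

lemma li_le_cdim: assumes W: "csubspace n W" and A: "A \<subseteq> W" "\<not> clindep n A"
  shows "finite A" "card A \<le> cdim n W"
proof -
  interpret V: vec_space "TYPE(complex)" n .
  have sub: "subspace class_ring W V.V" using W unfolding csubspace_def by simp
  have submod: "submodule class_ring W V.V" using sub unfolding subspace_def by simp
  interpret Wv: vectorspace class_ring "V.vs W" using V.subspace_is_vs[OF sub] .
  have fd: "Wv.fin_dim" using sub_basis[OF W] by blast
  have "\<not> Wv.lin_dep A" using V.span_li_not_depend(2)[OF A(1) submod] A(2) by simp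
  thus "finite A" "card A \<le> cdim n W" using Wv.li_le_dim[OF fd] A(1) unfolding cdim_def by auto
qed

lemma cspan_sub: assumes "G \<subseteq> carrier_vec n" shows "csubspace n (cspan n G)"
proof -
  interpret V: vec_space "TYPE(complex)" n .
  show ?thesis using V.span_is_subspace[OF assms] unfolding csubspace_def by simp
qed

lemma cspan_le: assumes W: "csubspace n W" and G: "G \<subseteq> W" shows "cspan n G \<subseteq> W"
proof -
  interpret V: vec_space "TYPE(complex)" n .
  have sub: "subspace class_ring W V.V" using W unfolding csubspace_def by simp
  have submod: "submodule class_ring W V.V" using sub unfolding subspace_def by simp
  show ?thesis using V.span_is_subset[OF G submod] by simp
qed

lemma cspan_own: assumes "G \<subseteq> carrier_vec n" shows "G \<subseteq> cspan n G"
proof -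
  interpret V: vec_space "TYPE(complex)" n .
  show ?thesis using V.in_own_span[OF assms] by simp
qed

lemma dim_bound_orth:
  assumes C: "csubspace n C" and g: "\<And>k. k < D \<Longrightarrow> g k \<in> carrier_vec n"
    and zero: "\<And>v. v \<in> C \<Longrightarrow> (\<forall>k<D. v \<bullet>c g k = 0) \<Longrightarrow> v = 0\<^sub>v n"
  shows "cdim n C \<le> D"
proof -
  have CC: "C \<subseteq> carrier_vec n" using csub_props(1)[OF C] .
  define G where "G = (\<lambda>k. proj n C *\<^sub>v g k) ` {..<D}"
  have GC: "G \<subseteq> C" unfolding G_def using proj_in[OF C g] by auto
  have Gc: "G \<subseteq> carrier_vec n" using GC CC by auto
  have fG: "finite G" unfolding G_def by simp
  have cG: "card G \<le> D" unfolding G_def using card_image_le[of "{..<D}"] by simp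
  define T where "T = cspan n G"
  have T: "csubspace n T" unfolding T_def by (rule cspan_sub[OF Gc])
  have TC: "T \<subseteq> C" unfolding T_def by (rule cspan_le[OF C GC])
  have GT: "G \<subseteq> T" unfolding T_def by (rule cspan_own[OF Gc])
  have "C \<subseteq> T"
  proof
    fix x assume x: "x \<in> C"
    have xC: "x \<in> carrier_vec n" using x CC by auto
    define y where "y = x - proj n T *\<^sub>v x"
    have pT: "proj n T *\<^sub>v x \<in> T" by (rule proj_in[OF T xC])
    have yC: "y \<in> C" unfolding y_def using csub_minus[OF C x] pT TC by auto
    have ycar: "y \<in> carrier_vec n" using yC CC by auto
    have "y = 0\<^sub>v n"
    proof (rule zero[OF yC], intro allI impI)
      fix k assume k: "k < D"
      have gT: "proj n C *\<^sub>v g k \<in> T" using GT k unfolding G_def by auto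
      have "y \<bullet>c (proj n C *\<^sub>v g k) = 0" unfolding y_def by (rule proj_orth[OF T xC gT])
      moreover have "y \<bullet>c (proj n C *\<^sub>v g k) = (proj n C *\<^sub>v y) \<bullet>c g k"
        using proj_selfadj[OF C ycar g[OF k]] by simp
      moreover have "proj n C *\<^sub>v y = y" by (rule proj_fix[OF C yC])
      ultimately show "y \<bullet>c g k = 0" by simp
    qed
    hence "x = proj n T *\<^sub>v x" unfolding y_def using xC proj_vC[OF T xC] vec_minus0 by blast
    thus "x \<in> T" using pT by simp
  qed
  hence "C = T" using TC by auto
  hence "cdim n C \<le> card G" using cdim_le_gen[OF C fG GC] unfolding T_def by simp
  thus ?thesis using cG by simp
qed

lemma perp_sub: assumes "S \<subseteq> carrier_vec n" shows "csubspace n (perp n S)"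
proof (rule csubI)
  show "perp n S \<subseteq> carrier_vec n" unfolding perp_def by auto
  show "0\<^sub>v n \<in> perp n S" unfolding perp_def using assms by (auto simp: cip_zero_left)
  fix x y assume x: "x \<in> perp n S" and y: "y \<in> perp n S"
  show "x + y \<in> perp n S" using x y assms unfolding perp_def by (auto simp: cip_add_left)
next
  fix x a assume x: "x \<in> perp n S"
  show "a \<cdot>\<^sub>v x \<in> perp n S" using x assms unfolding perp_def by (auto simp: cip_smult_left)
qed

lemma perp_dim_lt: assumes S: "csubspace n S" and s: "s \<in> S" "s \<noteq> 0\<^sub>v n"
  shows "cdim n (perp n S) + 1 \<le> n"
proof -
  interpret V: vec_space "TYPE(complex)" n .
  have SC: "S \<subseteq> carrier_vec n" using csub_props(1)[OF S] .
  have sC: "s \<in> carrier_vec n" using s SC by auto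
  have P: "csubspace n (perp n S)" by (rule perp_sub[OF SC])
  obtain B where B: "finite B" "B \<subseteq> perp n S" "\<not> clindep n B" "cspan n B = perp n S" "card B = cdim n (perp n S)"
    using sub_basis[OF P] by blast
  have sp: "s \<notin> perp n S"
  proof
    assume "s \<in> perp n S"
    hence "s \<bullet>c s = 0" using s unfolding perp_def by auto
    thus False using s sC by simp
  qed
  have BC: "B \<subseteq> carrier_vec n" using B(2) unfolding perp_def by auto
  have sB: "s \<notin> B" using sp B(2) by auto
  have "\<not> V.lin_dep (B \<union> {s})"
    using V.lin_dep_iff_in_span[OF BC _ sC sB] B(3,4) sp by simp
  hence "card (B \<union> {s}) \<le> n" using V.li_le_dim(2)[OF V.fin_dim] BC sC V.dim_is_n by auto
  moreover have "card (B \<union> {s}) = card B + 1" using B(1) sB by simp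
  ultimately show ?thesis using B(5) by simp
qed

lemma smult_mat_vec: fixes A :: "complex mat" assumes A: "A \<in> carrier_mat n n" and v: "v \<in> carrier_vec n"
  shows "(a \<cdot>\<^sub>m A) *\<^sub>v v = a \<cdot>\<^sub>v (A *\<^sub>v v)"
proof (rule vec_eqI_n[of _ n])
  show "(a \<cdot>\<^sub>m A) *\<^sub>v v \<in> carrier_vec n" using A v by (intro mult_mat_vec_carrier[of _ n n], auto)
  show "a \<cdot>\<^sub>v (A *\<^sub>v v) \<in> carrier_vec n" using A v by auto
  fix i assume i: "i < n"
  have "((a \<cdot>\<^sub>m A) *\<^sub>v v) $ i = (\<Sum>s<n. (a * A $$ (i,s)) * v $ s)"
    using A v i by (simp add: scalar_prod_def lessThan_atLeast0)
  also have "\<dots> = a * (\<Sum>s<n. A $$ (i,s) * v $ s)" by (simp add: sum_distrib_left mult.assoc)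
  also have "\<dots> = (a \<cdot>\<^sub>v (A *\<^sub>v v)) $ i" using A v i by (simp add: scalar_prod_def lessThan_atLeast0)
  finally show "((a \<cdot>\<^sub>m A) *\<^sub>v v) $ i = (a \<cdot>\<^sub>v (A *\<^sub>v v)) $ i" .
qed

lemma code_quad:
  assumes S: "csubspace n S" and C: "csubspace n C" and CS: "C \<subseteq> S"
    and M: "M \<in> carrier_mat n n"
    and eq: "proj n C * (proj n S * M * proj n S) * proj n C = complex_of_real \<epsilon> \<cdot>\<^sub>m proj n C"
    and u: "u \<in> C"
  shows "(M *\<^sub>v u) \<bullet>c u = complex_of_real \<epsilon> * (u \<bullet>c u)"
proof -
  let ?PC = "proj n C" and ?PS = "proj n S"
  have uC: "u \<in> carrier_vec n" using u csub_props(1)[OF C] by auto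
  have PC: "?PC \<in> carrier_mat n n" by (rule proj_carrier[OF C])
  have PS: "?PS \<in> carrier_mat n n" by (rule proj_carrier[OF S])
  have fixC: "?PC *\<^sub>v u = u" by (rule proj_fix[OF C u])
  have fixS: "?PS *\<^sub>v u = u" by (rule proj_fix[OF S]) (use u CS in auto)
  have MuC: "M *\<^sub>v u \<in> carrier_vec n" using M uC by auto
  have PMuC: "?PS *\<^sub>v (M *\<^sub>v u) \<in> carrier_vec n" using PS MuC by auto
  have "(?PC * (?PS * M * ?PS) * ?PC) *\<^sub>v u = ?PC *\<^sub>v (?PS *\<^sub>v (M *\<^sub>v (?PS *\<^sub>v (?PC *\<^sub>v u))))"
    using PC PS M uC by (simp add: assoc_mult_mat_vec[of _ n n _ n])
  also have "\<dots> = ?PC *\<^sub>v (?PS *\<^sub>v (M *\<^sub>v u))" using fixC fixS by simp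
  finally have L: "(?PC * (?PS * M * ?PS) * ?PC) *\<^sub>v u = ?PC *\<^sub>v (?PS *\<^sub>v (M *\<^sub>v u))" .
  have R: "(complex_of_real \<epsilon> \<cdot>\<^sub>m ?PC) *\<^sub>v u = complex_of_real \<epsilon> \<cdot>\<^sub>v u"
    using smult_mat_vec[OF PC uC] fixC by simp
  have E: "?PC *\<^sub>v (?PS *\<^sub>v (M *\<^sub>v u)) = complex_of_real \<epsilon> \<cdot>\<^sub>v u" using L R eq by simp
  have "(?PC *\<^sub>v (?PS *\<^sub>v (M *\<^sub>v u))) \<bullet>c u = complex_of_real \<epsilon> * (u \<bullet>c u)"
    unfolding E by (rule cip_smult_left[OF uC uC])
  moreover have "(?PC *\<^sub>v (?PS *\<^sub>v (M *\<^sub>v u))) \<bullet>c u = (?PS *\<^sub>v (M *\<^sub>v u)) \<bullet>c (?PC *\<^sub>v u)"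
    by (rule proj_selfadj[OF C PMuC uC])
  moreover have "(?PS *\<^sub>v (M *\<^sub>v u)) \<bullet>c u = (M *\<^sub>v u) \<bullet>c (?PS *\<^sub>v u)"
    by (rule proj_selfadj[OF S MuC uC])
  ultimately show ?thesis using fixC fixS by simp
qed

lemma code_small:
  fixes f :: "nat \<Rightarrow> complex vec" and lamf :: "nat \<Rightarrow> real" and Ai :: "complex mat"
  assumes fC: "\<And>j. j < n \<Longrightarrow> f j \<in> carrier_vec n"
    and on: "\<And>j k. j < n \<Longrightarrow> k < n \<Longrightarrow> f j \<bullet>c f k = (if j = k then 1 else 0)"
    and Ai: "Ai \<in> carrier_mat n n"
    and eig: "\<And>j. j < n \<Longrightarrow> Ai *\<^sub>v f j = complex_of_real (lamf j) \<cdot>\<^sub>v f j"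
    and pos: "\<And>j. j < n \<Longrightarrow> 0 < lamf j"
    and dec: "\<And>j. j + 1 < n \<Longrightarrow> lamf (j+1) < lamf j / (real n)^2"
    and mono: "\<And>j k. j \<le> k \<Longrightarrow> k < n \<Longrightarrow> lamf k \<le> lamf j"
    and C: "csubspace n C"
    and quad: "\<And>u. u \<in> C \<Longrightarrow> (Ai *\<^sub>v u) \<bullet>c u = complex_of_real \<epsilon> * (u \<bullet>c u)"
    and dimC: "D + 1 \<le> cdim n C" and D1: "1 \<le> D"
    and j: "j < D"
  shows "nsq n (proj n C *\<^sub>v f j) < 1 / (real n)^2"
proof -
  have CC: "C \<subseteq> carrier_vec n" using csub_props(1)[OF C] .
  define g where "g k = (if k < n then f k else 0\<^sub>v n)" for k
  have gC: "g k \<in> carrier_vec n" for k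
  proof (cases "k < n")
    case True thus ?thesis unfolding g_def using fC[OF True] by simp
  next
    case False thus ?thesis unfolding g_def by simp
  qed
  obtain v where v: "v \<in> C" "v \<noteq> 0\<^sub>v n" "\<forall>k<D. v \<bullet>c g k = 0"
  proof -
    have "\<not> (\<forall>v. v \<in> C \<longrightarrow> (\<forall>k<D. v \<bullet>c g k = 0) \<longrightarrow> v = 0\<^sub>v n)"
    proof
      assume as: "\<forall>v. v \<in> C \<longrightarrow> (\<forall>k<D. v \<bullet>c g k = 0) \<longrightarrow> v = 0\<^sub>v n"
      have "cdim n C \<le> D"
        by (rule dim_bound_orth[where g=g, OF C], rule gC, insert as, blast)
      thus False using dimC by simp
    qed
    then obtain v where "v \<in> C" "(\<forall>k<D. v \<bullet>c g k = 0)" "v \<noteq> 0\<^sub>v n" by blast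
    thus ?thesis using that by simp
  qed
  have vC: "v \<in> carrier_vec n" using v(1) CC by auto
  have nv: "nsq n v > 0" using nsq_ge0[of n v] nsq_eq0[OF vC] v(2) by linarith
  have vf: "v \<bullet>c f k = 0" if "k < D" "k < n" for k using v(3) that unfolding g_def by auto
  have nsqv: "nsq n v = (\<Sum>k<n. (cmod (v \<bullet>c f k))^2)" by (rule onb_nsq[OF fC on vC])
  have Dn: "D < n"
  proof (rule ccontr)
    assume "\<not> D < n"
    hence "\<forall>k<n. v \<bullet>c f k = 0" using vf by auto
    hence "nsq n v = 0" using nsqv by simp
    thus False using nv by simp
  qed
  have "complex_of_real (\<epsilon> * nsq n v) = (Ai *\<^sub>v v) \<bullet>c v"
    using quad[OF v(1)] cip_self[OF vC] by simp
  also have "\<dots> = complex_of_real (\<Sum>k<n. lamf k * (cmod (v \<bullet>c f k))^2)"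
    by (rule onb_quad[OF fC on Ai eig vC])
  finally have ev: "\<epsilon> * nsq n v = (\<Sum>k<n. lamf k * (cmod (v \<bullet>c f k))^2)" using of_real_eq_iff by blast
  have "(\<Sum>k<n. lamf k * (cmod (v \<bullet>c f k))^2) \<le> (\<Sum>k<n. lamf D * (cmod (v \<bullet>c f k))^2)"
  proof (rule sum_mono)
    fix k assume k: "k \<in> {..<n}"
    show "lamf k * (cmod (v \<bullet>c f k))^2 \<le> lamf D * (cmod (v \<bullet>c f k))^2"
    proof (cases "k < D")
      case True thus ?thesis using vf[OF True] k by simp
    next
      case False thus ?thesis using mono[of D k] k by (intro mult_right_mono, auto)
    qed
  qed
  also have "\<dots> = lamf D * nsq n v" using nsqv by (simp add: sum_distrib_left)
  finally have "\<epsilon> * nsq n v \<le> lamf D * nsq n v" using ev by simp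
  hence epsD: "\<epsilon> \<le> lamf D" using nv by simp
  have jn: "j < n" using j Dn by simp
  define u where "u = proj n C *\<^sub>v f j"
  have uinC: "u \<in> C" unfolding u_def by (rule proj_in[OF C fC[OF jn]])
  have uC: "u \<in> carrier_vec n" using uinC CC by auto
  define N where "N = nsq n u"
  have N0: "N \<ge> 0" unfolding N_def by (rule nsq_ge0)
  have "complex_of_real (\<epsilon> * N) = (Ai *\<^sub>v u) \<bullet>c u"
    using quad[OF uinC] cip_self[OF uC] unfolding N_def by simp
  also have "\<dots> = complex_of_real (\<Sum>k<n. lamf k * (cmod (u \<bullet>c f k))^2)"
    by (rule onb_quad[OF fC on Ai eig uC])
  finally have eu: "\<epsilon> * N = (\<Sum>k<n. lamf k * (cmod (u \<bullet>c f k))^2)" using of_real_eq_iff by blast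
  have "lamf j * (cmod (u \<bullet>c f j))^2 \<le> (\<Sum>k<n. lamf k * (cmod (u \<bullet>c f k))^2)"
    by (rule member_le_sum[of j "{..<n}" "\<lambda>k. lamf k * (cmod (u \<bullet>c f k))^2"], insert jn, auto intro!: mult_nonneg_nonneg less_imp_le[OF pos])
  moreover have "u \<bullet>c f j = complex_of_real N" unfolding u_def N_def by (rule proj_nsq[OF C fC[OF jn]])
  ultimately have "lamf j * N^2 \<le> \<epsilon> * N" using eu N0 by simp
  also have "\<dots> \<le> lamf D * N" using epsD N0 by (rule mult_right_mono)
  finally have key: "lamf j * N^2 \<le> lamf D * N" .
  have n0: "real n > 0" using jn by simp
  have "lamf D < lamf (D - 1) / (real n)^2" using dec[of "D - 1"] D1 Dn by simp
  also have "\<dots> \<le> lamf j / (real n)^2" using mono[of j "D - 1"] j Dn by (intro divide_right_mono, auto)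
  finally have lD: "lamf D < lamf j / (real n)^2" .
  show ?thesis
  proof (cases "N = 0")
    case True thus ?thesis using n0 unfolding N_def u_def by simp
  next
    case False
    hence Np: "N > 0" using N0 by simp
    have "lamf j * N \<le> lamf D" using key Np by (simp add: power2_eq_square)
    hence "lamf j * N < lamf j / (real n)^2" using lD by simp
    hence "N * lamf j < (1 / (real n)^2) * lamf j" by (simp add: mult.commute)
    hence "N < 1 / (real n)^2" using pos[OF jn] mult_less_cancel_right_pos by blast
    thus ?thesis unfolding N_def u_def .
  qed
qed

lemma color_sum:
  assumes K: "finite K" and KC: "\<And>C. C \<in> K \<Longrightarrow> csubspace n C" and S: "csubspace n S"
    and col: "\<forall>i<n. \<forall>j<n. (\<Sum>C\<in>K. proj n C $$ (i,j)) = proj n S $$ (i,j)"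
    and x: "x \<in> carrier_vec n"
  shows "nsq n (proj n S *\<^sub>v x) = (\<Sum>C\<in>K. nsq n (proj n C *\<^sub>v x))"
proof -
  have PS: "proj n S \<in> carrier_mat n n" by (rule proj_carrier[OF S])
  have PC: "proj n C \<in> carrier_mat n n" if "C \<in> K" for C by (rule proj_carrier[OF KC[OF that]])
  have ent: "(proj n S *\<^sub>v x) $ r = (\<Sum>C\<in>K. (proj n C *\<^sub>v x) $ r)" if r: "r < n" for r
  proof -
    have "(proj n S *\<^sub>v x) $ r = (\<Sum>s<n. proj n S $$ (r,s) * x $ s)"
      using PS r x by (simp add: scalar_prod_def lessThan_atLeast0)
    also have "\<dots> = (\<Sum>s<n. (\<Sum>C\<in>K. proj n C $$ (r,s)) * x $ s)"
      by (rule sum.cong, insert col r, auto)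
    also have "\<dots> = (\<Sum>s<n. \<Sum>C\<in>K. proj n C $$ (r,s) * x $ s)" by (simp add: sum_distrib_right)
    also have "\<dots> = (\<Sum>C\<in>K. \<Sum>s<n. proj n C $$ (r,s) * x $ s)" by (rule sum.swap)
    also have "\<dots> = (\<Sum>C\<in>K. (proj n C *\<^sub>v x) $ r)"
    proof (rule sum.cong, simp)
      fix C assume C: "C \<in> K"
      show "(\<Sum>s<n. proj n C $$ (r,s) * x $ s) = (proj n C *\<^sub>v x) $ r"
        using PC[OF C] r x by (simp add: scalar_prod_def lessThan_atLeast0)
    qed
    finally show ?thesis .
  qed
  have "complex_of_real (nsq n (proj n S *\<^sub>v x)) = (proj n S *\<^sub>v x) \<bullet>c x"
    by (rule proj_nsq[OF S x, symmetric])
  also have "\<dots> = (\<Sum>r<n. (\<Sum>C\<in>K. (proj n C *\<^sub>v x) $ r) * cnj (x $ r))"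
    unfolding cip_sum[OF x] by (rule sum.cong, auto simp: ent)
  also have "\<dots> = (\<Sum>r<n. \<Sum>C\<in>K. (proj n C *\<^sub>v x) $ r * cnj (x $ r))" by (simp add: sum_distrib_right)
  also have "\<dots> = (\<Sum>C\<in>K. \<Sum>r<n. (proj n C *\<^sub>v x) $ r * cnj (x $ r))" by (rule sum.swap)
  also have "\<dots> = (\<Sum>C\<in>K. complex_of_real (nsq n (proj n C *\<^sub>v x)))"
  proof (rule sum.cong, simp)
    fix C assume C: "C \<in> K"
    have "(\<Sum>r<n. (proj n C *\<^sub>v x) $ r * cnj (x $ r)) = (proj n C *\<^sub>v x) \<bullet>c x" by (simp add: cip_sum[OF x])
    also have "\<dots> = complex_of_real (nsq n (proj n C *\<^sub>v x))" by (rule proj_nsq[OF KC[OF C] x])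
    finally show "(\<Sum>r<n. (proj n C *\<^sub>v x) $ r * cnj (x $ r)) = complex_of_real (nsq n (proj n C *\<^sub>v x))" .
  qed
  also have "\<dots> = complex_of_real (\<Sum>C\<in>K. nsq n (proj n C *\<^sub>v x))" by simp
  finally show ?thesis using of_real_eq_iff by blast
qed

lemma lc_cip_left:
  fixes x :: "nat \<Rightarrow> complex vec"
  assumes w: "w \<in> carrier_vec n"
  shows "vec n (\<lambda>r. \<Sum>l\<in>I. \<alpha> l * x l $ r) \<bullet>c w = (\<Sum>l\<in>I. \<alpha> l * (\<Sum>r<n. x l $ r * cnj (w $ r)))"
proof -
  have "vec n (\<lambda>r. \<Sum>l\<in>I. \<alpha> l * x l $ r) \<bullet>c w = (\<Sum>r<n. (\<Sum>l\<in>I. \<alpha> l * x l $ r) * cnj (w $ r))"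
    unfolding cip_sum[OF w] by simp
  also have "\<dots> = (\<Sum>r<n. \<Sum>l\<in>I. \<alpha> l * (x l $ r * cnj (w $ r)))" by (simp add: sum_distrib_right mult.assoc)
  also have "\<dots> = (\<Sum>l\<in>I. \<Sum>r<n. \<alpha> l * (x l $ r * cnj (w $ r)))" by (rule sum.swap)
  also have "\<dots> = (\<Sum>l\<in>I. \<alpha> l * (\<Sum>r<n. x l $ r * cnj (w $ r)))" by (simp add: sum_distrib_left)
  finally show ?thesis .
qed

lemma lc_cip_right:
  fixes x :: "nat \<Rightarrow> complex vec"
  assumes w: "w \<in> carrier_vec n"
  shows "w \<bullet>c vec n (\<lambda>r. \<Sum>l\<in>I. \<alpha> l * x l $ r) = (\<Sum>l\<in>I. cnj (\<alpha> l) * (\<Sum>r<n. w $ r * cnj (x l $ r)))"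
proof -
  have "w \<bullet>c vec n (\<lambda>r. \<Sum>l\<in>I. \<alpha> l * x l $ r) = (\<Sum>r<n. w $ r * cnj (\<Sum>l\<in>I. \<alpha> l * x l $ r))"
    by (subst cip_sum, auto)
  also have "\<dots> = (\<Sum>r<n. \<Sum>l\<in>I. cnj (\<alpha> l) * (w $ r * cnj (x l $ r)))" by (simp add: sum_distrib_left mult_ac)
  also have "\<dots> = (\<Sum>l\<in>I. \<Sum>r<n. cnj (\<alpha> l) * (w $ r * cnj (x l $ r)))" by (rule sum.swap)
  also have "\<dots> = (\<Sum>l\<in>I. cnj (\<alpha> l) * (\<Sum>r<n. w $ r * cnj (x l $ r)))" by (simp add: sum_distrib_left)
  finally show ?thesis .
qed

lemma amgm: fixes a b t :: real assumes "t > 0" shows "a * b \<le> a^2 / (2*t) + t * b^2 / 2"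
proof -
  have "0 \<le> (a - t * b)^2" by simp
  hence "2 * t * (a * b) \<le> a^2 + t^2 * b^2" by (simp add: power2_eq_square algebra_simps)
  hence "a * b \<le> (a^2 + t^2 * b^2) / (2 * t)" using assms by (simp add: field_simps)
  also have "\<dots> = a^2 / (2*t) + t * b^2 / 2" using assms by (simp add: field_simps power2_eq_square)
  finally show ?thesis .
qed

lemma indep_core:
  fixes x y :: "nat \<Rightarrow> complex vec" and \<alpha> :: "nat \<Rightarrow> complex"
  assumes I: "finite I"
    and xC: "\<And>l. l \<in> I \<Longrightarrow> x l \<in> carrier_vec n"
    and yC: "\<And>l. l \<in> I \<Longrightarrow> y l \<in> carrier_vec n"
    and on: "\<And>l k. l \<in> I \<Longrightarrow> k \<in> I \<Longrightarrow> x l \<bullet>c x k = (if l = k then 1 else 0)"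
    and small: "(\<Sum>l\<in>I. nsq n (y l)) < 1"
    and eq: "\<And>r. r < n \<Longrightarrow> (\<Sum>l\<in>I. \<alpha> l * x l $ r) = (\<Sum>l\<in>I. \<alpha> l * y l $ r)"
  shows "\<forall>l\<in>I. \<alpha> l = 0"
proof -
  define z where "z = vec n (\<lambda>r. \<Sum>l\<in>I. \<alpha> l * x l $ r)"
  have zC: "z \<in> carrier_vec n" unfolding z_def by simp
  have z': "z = vec n (\<lambda>r. \<Sum>l\<in>I. \<alpha> l * y l $ r)" unfolding z_def by (rule eq_vecI, auto simp: eq)
  define Aa where "Aa = (\<Sum>l\<in>I. (cmod (\<alpha> l))^2)"
  have Aa0: "Aa \<ge> 0" unfolding Aa_def by (auto intro: sum_nonneg)
  have zxl: "z \<bullet>c x l = \<alpha> l" if l: "l \<in> I" for l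
  proof -
    have "z \<bullet>c x l = (\<Sum>k\<in>I. \<alpha> k * (\<Sum>r<n. x k $ r * cnj (x l $ r)))"
      unfolding z_def by (rule lc_cip_left[OF xC[OF l]])
    also have "\<dots> = (\<Sum>k\<in>I. \<alpha> k * (x k \<bullet>c x l))"
      by (rule sum.cong, simp, simp add: cip_sum[OF xC[OF l]])
    also have "\<dots> = (\<Sum>k\<in>I. if k = l then \<alpha> k else 0)"
      by (rule sum.cong, simp, simp add: on l)
    also have "\<dots> = \<alpha> l" using I l by simp
    finally show ?thesis .
  qed
  have "z \<bullet>c z = (\<Sum>l\<in>I. cnj (\<alpha> l) * (\<Sum>r<n. z $ r * cnj (x l $ r)))"
    by (subst (2) z_def, rule lc_cip_right[OF zC])
  also have "\<dots> = (\<Sum>l\<in>I. cnj (\<alpha> l) * \<alpha> l)"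
  proof (rule sum.cong, simp)
    fix l assume l: "l \<in> I"
    have "(\<Sum>r<n. z $ r * cnj (x l $ r)) = z \<bullet>c x l" by (simp add: cip_sum[OF xC[OF l]])
    thus "cnj (\<alpha> l) * (\<Sum>r<n. z $ r * cnj (x l $ r)) = cnj (\<alpha> l) * \<alpha> l" using zxl[OF l] by simp
  qed
  also have "\<dots> = complex_of_real Aa" unfolding Aa_def 
    by (simp add: complex_norm_square mult.commute flip: of_real_power)
  finally have zz1: "z \<bullet>c z = complex_of_real Aa" .
  have nz: "nsq n z = Aa" using zz1 cip_self[OF zC] of_real_eq_iff by metis
  have "z \<bullet>c z = (\<Sum>l\<in>I. cnj (\<alpha> l) * (\<Sum>r<n. z $ r * cnj (y l $ r)))"
    by (subst (2) z', rule lc_cip_right[OF zC])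
  also have "\<dots> = (\<Sum>l\<in>I. cnj (\<alpha> l) * (z \<bullet>c y l))"
    by (rule sum.cong, simp, simp add: cip_sum[OF yC])
  finally have zz2: "z \<bullet>c z = (\<Sum>l\<in>I. cnj (\<alpha> l) * (z \<bullet>c y l))" .
  have "Aa = cmod (z \<bullet>c z)" using zz1 Aa0 by simp
  also have "\<dots> \<le> (\<Sum>l\<in>I. cmod (cnj (\<alpha> l) * (z \<bullet>c y l)))" unfolding zz2 by (rule norm_sum)
  also have "\<dots> \<le> (\<Sum>l\<in>I. cmod (\<alpha> l) * (sqrt Aa * sqrt (nsq n (y l))))"
  proof (rule sum_mono)
    fix l assume l: "l \<in> I"
    have "cmod (z \<bullet>c y l) \<le> sqrt (nsq n z) * sqrt (nsq n (y l))" by (rule cauchy_schwarz[OF zC yC[OF l]])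
    thus "cmod (cnj (\<alpha> l) * (z \<bullet>c y l)) \<le> cmod (\<alpha> l) * (sqrt Aa * sqrt (nsq n (y l)))"
      using nz by (simp add: norm_mult mult_left_mono)
  qed
  also have "\<dots> = sqrt Aa * (\<Sum>l\<in>I. cmod (\<alpha> l) * sqrt (nsq n (y l)))"
    by (subst sum_distrib_left, rule sum.cong, auto simp: mult.left_commute)
  finally have key: "Aa \<le> sqrt Aa * (\<Sum>l\<in>I. cmod (\<alpha> l) * sqrt (nsq n (y l)))" .
  show ?thesis
  proof (cases "Aa = 0")
    case True
    have "\<forall>l\<in>I. (cmod (\<alpha> l))^2 = 0"
      using True unfolding Aa_def by (subst (asm) sum_nonneg_eq_0_iff[OF I], auto)
    thus ?thesis by simp
  next
    case False
    define t where "t = sqrt Aa"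
    have t: "t > 0" unfolding t_def using False Aa0 by simp
    have tt: "t^2 = Aa" unfolding t_def using Aa0 by simp
    have "t^2 \<le> t * (\<Sum>l\<in>I. cmod (\<alpha> l) * sqrt (nsq n (y l)))" using key tt unfolding t_def by simp
    hence "t \<le> (\<Sum>l\<in>I. cmod (\<alpha> l) * sqrt (nsq n (y l)))" using t by (simp add: power2_eq_square)
    also have "\<dots> \<le> (\<Sum>l\<in>I. (cmod (\<alpha> l))^2 / (2*t) + t * (sqrt (nsq n (y l)))^2 / 2)"
      by (rule sum_mono, rule amgm[OF t])
    also have "\<dots> = Aa / (2*t) + t / 2 * (\<Sum>l\<in>I. nsq n (y l))"
      unfolding Aa_def by (simp add: sum.distrib sum_divide_distrib sum_distrib_left nsq_ge0)
    also have "\<dots> = t / 2 + t / 2 * (\<Sum>l\<in>I. nsq n (y l))"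
    proof -
      have "Aa / (2*t) = t / 2" using t tt[symmetric] by (simp add: power2_eq_square field_simps)
      thus ?thesis by simp
    qed
    also have "\<dots> < t / 2 + t / 2 * 1" using small t by (intro add_strict_left_mono mult_strict_left_mono, auto)
    finally show ?thesis by simp
  qed
qed

lemma li_from_coeffs:
  fixes u :: "nat \<Rightarrow> complex vec"
  assumes I: "finite I" and uC: "\<And>l. l \<in> I \<Longrightarrow> u l \<in> carrier_vec n"
    and coeff: "\<And>\<alpha>. (\<forall>r<n. (\<Sum>l\<in>I. \<alpha> l * u l $ r) = 0) \<Longrightarrow> \<forall>l\<in>I. \<alpha> l = 0"
  shows "inj_on u I" "\<not> clindep n (u ` I)"
proof -
  interpret V: vec_space "TYPE(complex)" n .
  show inj: "inj_on u I"
  proof (rule inj_onI, rule ccontr)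
    fix l k assume l: "l \<in> I" and k: "k \<in> I" and ul: "u l = u k" and lk: "l \<noteq> k"
    define \<alpha> where "\<alpha> j = (if j = l then 1 else if j = k then -1 else (0::complex))" for j
    have "\<forall>r<n. (\<Sum>j\<in>I. \<alpha> j * u j $ r) = 0"
    proof (intro allI impI)
      fix r assume r: "r < n"
      have "(\<Sum>j\<in>I. \<alpha> j * u j $ r) = (\<Sum>j\<in>I. (if j = l then u l $ r else 0) - (if j = k then u k $ r else 0))"
        by (rule sum.cong, auto simp: \<alpha>_def lk)
      also have "\<dots> = u l $ r - u k $ r" using I l k by (simp add: sum_subtractf)
      also have "\<dots> = 0" using ul by simp
      finally show "(\<Sum>j\<in>I. \<alpha> j * u j $ r) = 0" .
    qed
    hence "\<alpha> l = 0" using coeff l by blast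
    thus False unfolding \<alpha>_def by simp
  qed
  show "\<not> clindep n (u ` I)"
  proof
    assume "clindep n (u ` I)"
    then obtain A a v where A: "finite A" "A \<subseteq> u ` I" "V.lincomb a A = 0\<^sub>v n" "v \<in> A" "a v \<noteq> 0"
      unfolding V.lin_dep_def by auto
    define J where "J = {l \<in> I. u l \<in> A}"
    have uJ: "u ` J = A" unfolding J_def using A(2) by auto
    have injJ: "inj_on u J" using inj unfolding J_def by (rule inj_on_subset, auto)
    have AC: "A \<subseteq> carrier_vec n" using A(2) uC by auto
    define \<alpha> where "\<alpha> l = (if u l \<in> A then a (u l) else 0)" for l
    have "\<forall>r<n. (\<Sum>l\<in>I. \<alpha> l * u l $ r) = 0"
    proof (intro allI impI)
      fix r assume r: "r < n"
      have "(\<Sum>l\<in>I. \<alpha> l * u l $ r) = (\<Sum>l\<in>J. a (u l) * u l $ r)"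
        unfolding J_def \<alpha>_def by (rule sum.mono_neutral_cong_right, insert I, auto)
      also have "\<dots> = (\<Sum>w\<in>A. a w * w $ r)"
        by (subst uJ[symmetric], subst sum.reindex[OF injJ], simp)
      also have "\<dots> = V.lincomb a A $ r" by (rule V.lincomb_index[OF r AC, symmetric])
      also have "\<dots> = 0" using A(3) r by simp
      finally show "(\<Sum>l\<in>I. \<alpha> l * u l $ r) = 0" .
    qed
    hence z: "\<forall>l\<in>I. \<alpha> l = 0" by (rule coeff)
    obtain l where l: "l \<in> I" "u l = v" using A(2,4) by auto
    have "\<alpha> l = a v" unfolding \<alpha>_def using l A(4) by simp
    thus False using z l A(5) by simp
  qed
qed

lemma Ai_edge: assumes AC: "\<forall>k\<in>{1..m}. A k \<in> carrier_mat n n" and i: "i \<in> {1..m}"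
  shows "A i \<in> edge_space n m A"
proof -
  define c where "c k = (if k = i then 1 else (0::real))" for k
  have "lin_comb n m A c = A i"
  proof (rule eq_matI)
    have Ai: "A i \<in> carrier_mat n n" using AC i by blast
    show "dim_row (lin_comb n m A c) = dim_row (A i)" "dim_col (lin_comb n m A c) = dim_col (A i)"
      using Ai unfolding lin_comb_def by auto
    fix r s assume rs: "r < dim_row (A i)" "s < dim_col (A i)"
    hence rs': "r < n" "s < n" using Ai by auto
    have "lin_comb n m A c $$ (r,s) = (\<Sum>k\<in>{1..m}. complex_of_real (c k) * A k $$ (r,s))"
      using rs' i unfolding lin_comb_def c_def by simp
    also have "\<dots> = (\<Sum>k\<in>{1..m}. if k = i then A i $$ (r,s) else 0)"
      by (rule sum.cong, auto simp: c_def)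
    also have "\<dots> = A i $$ (r,s)" using i by simp
    finally show "lin_comb n m A c $$ (r,s) = A i $$ (r,s)" .
  qed
  thus ?thesis unfolding edge_space_def by (metis (mono_tags, lifting) mem_Collect_eq)
qed

lemma mono_from_dec:
  fixes lamf :: "nat \<Rightarrow> real"
  assumes pos: "\<And>j. j < n \<Longrightarrow> 0 < lamf j"
    and dec: "\<And>j. j + 1 < n \<Longrightarrow> lamf (j+1) < lamf j / (real n)^2"
    and n: "n \<ge> 1"
  shows "j \<le> k \<Longrightarrow> k < n \<Longrightarrow> lamf k \<le> lamf j"
proof (induction k)
  case 0 thus ?case by simp
next
  case (Suc k)
  show ?case
  proof (cases "j = Suc k")
    case True thus ?thesis by simp
  next
    case False
    hence jk: "j \<le> k" using Suc.prems by simp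
    have IH: "lamf k \<le> lamf j" using Suc.IH[OF jk] Suc.prems by simp
    have "lamf (k+1) < lamf k / (real n)^2" using dec[of k] Suc.prems by simp
    also have "\<dots> \<le> lamf k"
    proof -
      have "(real n)^2 \<ge> 1" using n by simp
      moreover have "lamf k > 0" using pos[of k] Suc.prems by simp
      ultimately show ?thesis by (simp add: divide_le_eq)
    qed
    finally show ?thesis using IH by simp
  qed
qed

lemma cdim_zero: "cdim n {0\<^sub>v n} = 0"
proof -
  interpret V: vec_space "TYPE(complex)" n .
  have S: "csubspace n {0\<^sub>v n}" by (rule csubI, auto)
  have "cspan n {} = {0\<^sub>v n}" using V.span_empty by simp
  thus ?thesis using cdim_le_gen[OF S, of "{}"] by simp
qed

theorem lemma6:
  fixes n m :: nat and A :: "nat \<Rightarrow> complex mat"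
    and S :: "complex vec set" and K :: "complex vec set set"
  assumes "2 \<le> n" and "1 \<le> m" and "m \<le> n - 1"
    and "is_Q n m A"
    and "csubspace n S" and "S \<noteq> {0\<^sub>v n}"
    and "is_coloring n S (induced_edges n S (edge_space n m A)) K"
  shows "\<exists>C\<in>K. cdim n C \<le> nat \<lceil>(real (cdim n (perp n S)) + 1) / real m\<rceil>"
proof (rule ccontr)
  note n2 = assms(1) and m1 = assms(2) and S = assms(5) and Sne = assms(6) and col = assms(7)
  define p where "p = cdim n (perp n S)"
  define D where "D = nat \<lceil>(real p + 1) / real m\<rceil>"
  assume "\<not> (\<exists>C\<in>K. cdim n C \<le> nat \<lceil>(real (cdim n (perp n S)) + 1) / real m\<rceil>)"
  hence big: "\<And>C. C \<in> K \<Longrightarrow> D + 1 \<le> cdim n C" unfolding D_def p_def by force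
  have AC: "\<forall>k\<in>{1..m}. A k \<in> carrier_mat n n" using assms(4) unfolding is_Q_def by blast
  have Q5: "\<exists>(b :: nat \<Rightarrow> complex vec) (\<pi> :: nat \<Rightarrow> nat \<Rightarrow> nat) (lam :: nat \<Rightarrow> nat \<Rightarrow> real).
        (\<forall>j\<in>{1..n}. b j \<in> carrier_vec n) \<and>
        (\<forall>j\<in>{1..n}. \<forall>l\<in>{1..n}. b j \<bullet>c b l = (if j = l then 1 else 0)) \<and>
        (\<forall>i\<in>{1..m}. bij_betw (\<pi> i) {1..n} {1..n}) \<and>
        (\<forall>i\<in>{1..m}. \<forall>j\<in>{1..n}.
            A i *\<^sub>v b (\<pi> i j) = complex_of_real (lam i j) \<cdot>\<^sub>v b (\<pi> i j)) \<and>
        (\<forall>i\<in>{1..m}. \<forall>j. 1 \<le> j \<and> j < n \<longrightarrow>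
            0 < lam i (j+1) \<and> lam i (j+1) < lam i j / (real n)^2) \<and>
        (\<forall>i. 1 \<le> i \<and> i < m \<longrightarrow> (\<forall>j\<in>{1..n}.
            \<pi> (i+1) j = \<pi> i ((j + shift n m i - 1) mod n + 1))) \<and>
        (\<exists>e. bij_betw e {1..n} {1..n} \<and>
            (\<forall>l\<in>{1..n}. \<exists>i\<in>{1..m}. e l = \<pi> i (nat \<lceil>real l / real m\<rceil>)))"
    using assms(4) unfolding is_Q_def by (elim conjE) assumption
  then obtain b \<pi> lam where H: "(\<forall>j\<in>{1..n}. b j \<in> carrier_vec n) \<and>
        (\<forall>j\<in>{1..n}. \<forall>l\<in>{1..n}. b j \<bullet>c b l = (if j = l then 1 else 0)) \<and>
        (\<forall>i\<in>{1..m}. bij_betw (\<pi> i) {1..n} {1..n}) \<and>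
        (\<forall>i\<in>{1..m}. \<forall>j\<in>{1..n}.
            A i *\<^sub>v b (\<pi> i j) = complex_of_real (lam i j) \<cdot>\<^sub>v b (\<pi> i j)) \<and>
        (\<forall>i\<in>{1..m}. \<forall>j. 1 \<le> j \<and> j < n \<longrightarrow>
            0 < lam i (j+1) \<and> lam i (j+1) < lam i j / (real n)^2) \<and>
        (\<forall>i. 1 \<le> i \<and> i < m \<longrightarrow> (\<forall>j\<in>{1..n}.
            \<pi> (i+1) j = \<pi> i ((j + shift n m i - 1) mod n + 1))) \<and>
        (\<exists>e. bij_betw e {1..n} {1..n} \<and>
            (\<forall>l\<in>{1..n}. \<exists>i\<in>{1..m}. e l = \<pi> i (nat \<lceil>real l / real m\<rceil>)))"
    by (elim exE) (rule that)
  note bC = H[THEN conjunct1]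
  note bon = H[THEN conjunct2, THEN conjunct1]
  note \<pi>bij = H[THEN conjunct2, THEN conjunct2, THEN conjunct1]
  note eig = H[THEN conjunct2, THEN conjunct2, THEN conjunct2, THEN conjunct1]
  note trop = H[THEN conjunct2, THEN conjunct2, THEN conjunct2, THEN conjunct2, THEN conjunct1]
  note eex = H[THEN conjunct2, THEN conjunct2, THEN conjunct2, THEN conjunct2, THEN conjunct2, THEN conjunct2]
  obtain e where ebij: "bij_betw e {1..n} {1..n}" and
    eprop: "\<forall>l\<in>{1..n}. \<exists>i\<in>{1..m}. e l = \<pi> i (nat \<lceil>real l / real m\<rceil>)" using eex by blast
  have SC: "S \<subseteq> carrier_vec n" using csub_props(1)[OF S] .
  obtain s where s: "s \<in> S" "s \<noteq> 0\<^sub>v n" using Sne csub_props(2)[OF S] by blast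
  have sC: "s \<in> carrier_vec n" using s SC by auto
  have pn: "p + 1 \<le> n" unfolding p_def by (rule perp_dim_lt[OF S s])
  have D1: "1 \<le> D"
  proof -
    have "(real p + 1) / real m > 0" using m1 by simp
    thus ?thesis unfolding D_def by linarith
  qed
  have Dp: "D \<le> p + 1"
  proof -
    have "(real p + 1) / real m \<le> real p + 1" using m1 by (simp add: divide_le_eq)
    hence "\<lceil>(real p + 1) / real m\<rceil> \<le> int (p + 1)" by (simp add: ceiling_le_iff)
    thus ?thesis unfolding D_def by linarith
  qed

  have Kfin: "finite K" using col unfolding is_coloring_def by blast
  have Kcode: "\<And>C. C \<in> K \<Longrightarrow> is_code n S (induced_edges n S (edge_space n m A)) C"
    using col unfolding is_coloring_def by blast
  have Ksum: "\<forall>i<n. \<forall>j<n. (\<Sum>C\<in>K. proj n C $$ (i,j)) = proj n S $$ (i,j)"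
    using col unfolding is_coloring_def by blast
  have KC: "\<And>C. C \<in> K \<Longrightarrow> csubspace n C" using Kcode unfolding is_code_def by blast
  have KS: "\<And>C. C \<in> K \<Longrightarrow> C \<subseteq> S" using Kcode unfolding is_code_def by blast
  have n0: "real n > 0" using n2 by simp
  have bC': "\<And>j. j \<in> {1..n} \<Longrightarrow> b j \<in> carrier_vec n" using bC by blast
  have bon': "\<And>j l. j \<in> {1..n} \<Longrightarrow> l \<in> {1..n} \<Longrightarrow> b j \<bullet>c b l = (if j = l then 1 else 0)" using bon by blast
  have small: "nsq n (proj n C *\<^sub>v b (\<pi> i j)) < 1 / (real n)^2"
    if C: "C \<in> K" and i: "i \<in> {1..m}" and j: "j \<in> {1..D}" for C i j
  proof -
    have Cs: "csubspace n C" using KC[OF C] .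
    obtain \<epsilon> where \<epsilon>: "\<forall>X\<in>induced_edges n S (edge_space n m A).
        proj n C * X * proj n C = complex_of_real (\<epsilon> X) \<cdot>\<^sub>m proj n C"
      using Kcode[OF C] unfolding is_code_def by blast
    have Ai: "A i \<in> carrier_mat n n" using AC i by blast
    have XE: "proj n S * A i * proj n S \<in> induced_edges n S (edge_space n m A)"
      unfolding induced_edges_def using Ai_edge[OF AC i] by blast
    define ee where "ee = \<epsilon> (proj n S * A i * proj n S)"
    have eq: "proj n C * (proj n S * A i * proj n S) * proj n C = complex_of_real ee \<cdot>\<^sub>m proj n C"
      using \<epsilon> XE unfolding ee_def by blast
    have quad: "\<And>u. u \<in> C \<Longrightarrow> (A i *\<^sub>v u) \<bullet>c u = complex_of_real ee * (u \<bullet>c u)"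
      by (rule code_quad[OF S Cs KS[OF C] Ai eq])
    define f where "f k = b (\<pi> i (k+1))" for k
    define lamf where "lamf k = lam i (k+1)" for k
    have \<pi>i: "bij_betw (\<pi> i) {1..n} {1..n}" using \<pi>bij i by blast
    have \<pi>in: "\<pi> i k \<in> {1..n}" if "k \<in> {1..n}" for k using \<pi>i that bij_betwE by blast
    have \<pi>in': "\<pi> i (k+1) \<in> {1..n}" if "k < n" for k by (rule \<pi>in, insert that, auto)
    have fC: "f k \<in> carrier_vec n" if "k < n" for k unfolding f_def by (rule bC'[OF \<pi>in'[OF that]])
    have fon: "f k \<bullet>c f l = (if k = l then 1 else 0)" if "k < n" "l < n" for k l
    proof -
      have "f k \<bullet>c f l = (if \<pi> i (k+1) = \<pi> i (l+1) then 1 else 0)"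
        unfolding f_def by (rule bon'[OF \<pi>in'[OF that(1)] \<pi>in'[OF that(2)]])
      moreover have "\<pi> i (k+1) = \<pi> i (l+1) \<longleftrightarrow> k + 1 = l + 1"
        by (rule inj_on_eq_iff[OF bij_betw_imp_inj_on[OF \<pi>i]], insert that, auto)
      ultimately show ?thesis by simp
    qed
    have feig: "A i *\<^sub>v f k = complex_of_real (lamf k) \<cdot>\<^sub>v f k" if "k < n" for k
    proof -
      have "k + 1 \<in> {1..n}" using that by auto
      thus ?thesis unfolding f_def lamf_def using eig i by blast
    qed
    have tropi: "\<And>j. 1 \<le> j \<and> j < n \<longrightarrow> 0 < lam i (j+1) \<and> lam i (j+1) < lam i j / (real n)^2"
      using trop i by blast
    have dec: "lamf (k+1) < lamf k / (real n)^2" if "k + 1 < n" for k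
      unfolding lamf_def using tropi[of "k+1"] that by simp
    have pos: "0 < lamf k" if k: "k < n" for k
    proof (cases k)
      case 0
      have h: "1 \<le> (1::nat) \<and> 1 < n" using n2 by simp
      have "0 < lam i (1+1) \<and> lam i (1+1) < lam i 1 / (real n)^2" using mp[OF tropi[of 1] h] .
      hence "0 < lam i 1 / (real n)^2" by linarith
      hence "0 < lam i 1" using n0 by (simp add: zero_less_divide_iff)
      thus ?thesis using 0 unfolding lamf_def by simp
    next
      case (Suc k') thus ?thesis unfolding lamf_def using tropi[of k] k by simp
    qed
    have mono: "\<And>j k. j \<le> k \<Longrightarrow> k < n \<Longrightarrow> lamf k \<le> lamf j"
      by (rule mono_from_dec[where lamf=lamf and n=n], rule pos, assumption, rule dec, assumption, insert n2, auto)
    have "nsq n (proj n C *\<^sub>v f (j - 1)) < 1 / (real n)^2"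
      by (rule code_small[OF fC fon Ai feig pos dec mono Cs quad big[OF C] D1], insert j, auto)
    thus ?thesis unfolding f_def using j by simp
  qed

  have colsum: "\<And>x. x \<in> carrier_vec n \<Longrightarrow> nsq n (proj n S *\<^sub>v x) = (\<Sum>C\<in>K. nsq n (proj n C *\<^sub>v x))"
    by (rule color_sum[OF Kfin KC S Ksum])
  have Kne: "K \<noteq> {}"
  proof
    assume "K = {}"
    hence "nsq n (proj n S *\<^sub>v s) = 0" using colsum[OF sC] by simp
    hence "nsq n s = 0" using proj_fix[OF S s(1)] by simp
    thus False using nsq_eq0[OF sC] s(2) by simp
  qed
  define bb where "bb j = b (j+1)" for j
  have bbC: "bb j \<in> carrier_vec n" if "j < n" for j unfolding bb_def by (rule bC', insert that, auto)
  have bbon: "bb j \<bullet>c bb k = (if j = k then 1 else 0)" if "j < n" "k < n" for j k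
  proof -
    have "bb j \<bullet>c bb k = (if j + 1 = k + 1 then 1 else 0)" unfolding bb_def by (rule bon', insert that, auto)
    thus ?thesis by simp
  qed
  have bbn: "nsq n (bb j) = 1" if "j < n" for j
  proof -
    have "complex_of_real (nsq n (bb j)) = 1" using cip_self[OF bbC[OF that]] bbon[OF that that] by simp
    thus ?thesis by (metis of_real_1 of_real_eq_iff)
  qed
  have cnt: "1 \<le> (\<Sum>j<n. nsq n (proj n C *\<^sub>v bb j))" if C: "C \<in> K" for C
  proof -
    have Cs: "csubspace n C" using KC[OF C] .
    have CC: "C \<subseteq> carrier_vec n" using csub_props(1)[OF Cs] .
    obtain u where u: "u \<in> C" "u \<noteq> 0\<^sub>v n"
    proof (rule ccontr)
      assume "\<not> thesis"
      hence "\<forall>u\<in>C. u = 0\<^sub>v n" using that by blast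
      hence "C = {0\<^sub>v n}" using csub_props(2)[OF Cs] by blast
      hence "cdim n C = 0" using cdim_zero by simp
      thus False using big[OF C] by simp
    qed
    have uC: "u \<in> carrier_vec n" using u CC by auto
    have nu: "nsq n u > 0" using nsq_ge0[of n u] nsq_eq0[OF uC] u(2) by linarith
    have "nsq n u = (\<Sum>j<n. (cmod (u \<bullet>c bb j))^2)" by (rule onb_nsq[OF bbC bbon uC])
    also have "\<dots> \<le> (\<Sum>j<n. nsq n u * nsq n (proj n C *\<^sub>v bb j))"
    proof (rule sum_mono)
      fix j assume j: "j \<in> {..<n}"
      have bj: "bb j \<in> carrier_vec n" using bbC j by simp
      have "u \<bullet>c bb j = (proj n C *\<^sub>v u) \<bullet>c bb j" using proj_fix[OF Cs u(1)] by simp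
      also have "\<dots> = u \<bullet>c (proj n C *\<^sub>v bb j)" by (rule proj_selfadj[OF Cs uC bj])
      finally have e: "u \<bullet>c bb j = u \<bullet>c (proj n C *\<^sub>v bb j)" .
      show "(cmod (u \<bullet>c bb j))^2 \<le> nsq n u * nsq n (proj n C *\<^sub>v bb j)"
        unfolding e by (rule cauchy_schwarz_sq[OF uC proj_vC[OF Cs bj]])
    qed
    also have "\<dots> = nsq n u * (\<Sum>j<n. nsq n (proj n C *\<^sub>v bb j))" by (simp add: sum_distrib_left)
    finally have "nsq n u * 1 \<le> nsq n u * (\<Sum>j<n. nsq n (proj n C *\<^sub>v bb j))" by simp
    thus ?thesis using nu by (simp only: mult_le_cancel_left_pos)
  qed
  have cardK: "real (card K) \<le> real n"
  proof -
    have "real (card K) = (\<Sum>C\<in>K. 1)" by simp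
    also have "\<dots> \<le> (\<Sum>C\<in>K. \<Sum>j<n. nsq n (proj n C *\<^sub>v bb j))" by (rule sum_mono, rule cnt)
    also have "\<dots> = (\<Sum>j<n. \<Sum>C\<in>K. nsq n (proj n C *\<^sub>v bb j))" by (rule sum.swap)
    also have "\<dots> = (\<Sum>j<n. nsq n (proj n S *\<^sub>v bb j))"
      by (rule sum.cong, simp, rule colsum[symmetric], rule bbC, simp)
    also have "\<dots> \<le> (\<Sum>j<n. nsq n (bb j))"
      by (rule sum_mono, rule proj_nsq_le[OF S], rule bbC, simp)
    also have "\<dots> = (\<Sum>j<n. 1)" by (rule sum.cong, simp, rule bbn, simp)
    also have "\<dots> = real n" by simp
    finally show ?thesis .
  qed
  define I where "I = {1..p+1}"
  define x where "x l = b (e l)" for l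
  have fI: "finite I" unfolding I_def by simp
  have Ine: "I \<noteq> {}" unfolding I_def by simp
  have In: "l \<in> {1..n}" if "l \<in> I" for l using that pn unfolding I_def by auto
  have ein: "e l \<in> {1..n}" if "l \<in> I" for l using bij_betwE[OF ebij] In[OF that] by blast
  have xC: "x l \<in> carrier_vec n" if "l \<in> I" for l unfolding x_def by (rule bC'[OF ein[OF that]])
  have xon: "x l \<bullet>c x k = (if l = k then 1 else 0)" if "l \<in> I" "k \<in> I" for l k
  proof -
    have "x l \<bullet>c x k = (if e l = e k then 1 else 0)" unfolding x_def by (rule bon'[OF ein[OF that(1)] ein[OF that(2)]])
    moreover have "e l = e k \<longleftrightarrow> l = k"
      by (rule inj_on_eq_iff[OF bij_betw_imp_inj_on[OF ebij] In[OF that(1)] In[OF that(2)]])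
    ultimately show ?thesis by simp
  qed
  have xsmall: "nsq n (proj n S *\<^sub>v x l) < 1 / real n" if l: "l \<in> I" for l
  proof -
    obtain i where i: "i \<in> {1..m}" and el: "e l = \<pi> i (nat \<lceil>real l / real m\<rceil>)"
      using eprop In[OF l] by blast
    define j where "j = nat \<lceil>real l / real m\<rceil>"
    have l1: "1 \<le> l" "l \<le> p + 1" using l unfolding I_def by auto
    have j1: "1 \<le> j"
    proof -
      have "real l / real m > 0" using l1 m1 by simp
      thus ?thesis unfolding j_def by linarith
    qed
    have jD: "j \<le> D"
    proof -
      have "real l / real m \<le> (real p + 1) / real m" using l1 m1 by (simp add: divide_right_mono)
      hence "\<lceil>real l / real m\<rceil> \<le> \<lceil>(real p + 1) / real m\<rceil>" by (rule ceiling_mono)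
      thus ?thesis unfolding j_def D_def by linarith
    qed
    have xl: "x l = b (\<pi> i j)" unfolding x_def el j_def ..
    have "nsq n (proj n S *\<^sub>v x l) = (\<Sum>C\<in>K. nsq n (proj n C *\<^sub>v x l))" by (rule colsum[OF xC[OF l]])
    also have "\<dots> < (\<Sum>C\<in>K. 1 / (real n)^2)"
    proof (rule sum_strict_mono[OF Kfin Kne])
      fix C assume C: "C \<in> K"
      show "nsq n (proj n C *\<^sub>v x l) < 1 / (real n)^2" unfolding xl
        by (rule small[OF C i], insert j1 jD, auto)
    qed
    also have "\<dots> = real (card K) / (real n)^2" by simp
    also have "\<dots> \<le> real n / (real n)^2" using cardK by (simp add: divide_right_mono)
    also have "\<dots> = 1 / real n" using n0 by (simp add: power2_eq_square)
    finally show ?thesis .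
  qed
  have Qsum: "(\<Sum>l\<in>I. nsq n (proj n S *\<^sub>v x l)) < 1"
  proof -
    have "(\<Sum>l\<in>I. nsq n (proj n S *\<^sub>v x l)) < (\<Sum>l\<in>I. 1 / real n)"
      by (rule sum_strict_mono[OF fI Ine xsmall])
    also have "\<dots> = real (p + 1) / real n" unfolding I_def by simp
    also have "\<dots> \<le> 1" using pn n0 by (simp add: divide_le_eq)
    finally show ?thesis .
  qed
  define u where "u l = x l - proj n S *\<^sub>v x l" for l
  have yC: "proj n S *\<^sub>v x l \<in> carrier_vec n" if "l \<in> I" for l by (rule proj_vC[OF S xC[OF that]])
  have uC: "u l \<in> carrier_vec n" if "l \<in> I" for l unfolding u_def using xC[OF that] yC[OF that] by simp
  have coeff: "\<forall>l\<in>I. \<alpha> l = 0" if h: "\<forall>r<n. (\<Sum>l\<in>I. \<alpha> l * u l $ r) = 0" for \<alpha>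
  proof (rule indep_core[OF fI xC yC xon Qsum])
    fix r assume r: "r < n"
    have "(\<Sum>l\<in>I. \<alpha> l * u l $ r) = (\<Sum>l\<in>I. \<alpha> l * x l $ r - \<alpha> l * (proj n S *\<^sub>v x l) $ r)"
    proof (rule sum.cong, simp)
      fix l assume l: "l \<in> I"
      have "dim_vec (proj n S *\<^sub>v x l) = n" using yC[OF l] carrier_vecD by blast
      hence "u l $ r = x l $ r - (proj n S *\<^sub>v x l) $ r" unfolding u_def using r by simp
      thus "\<alpha> l * u l $ r = \<alpha> l * x l $ r - \<alpha> l * (proj n S *\<^sub>v x l) $ r" by (simp add: right_diff_distrib)
    qed
    also have "\<dots> = (\<Sum>l\<in>I. \<alpha> l * x l $ r) - (\<Sum>l\<in>I. \<alpha> l * (proj n S *\<^sub>v x l) $ r)"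
      by (rule sum_subtractf)
    finally show "(\<Sum>l\<in>I. \<alpha> l * x l $ r) = (\<Sum>l\<in>I. \<alpha> l * (proj n S *\<^sub>v x l) $ r)" using h r by simp
  qed
  have injU: "inj_on u I" and liU: "\<not> clindep n (u ` I)"
    by (rule li_from_coeffs[OF fI uC coeff], assumption+)+
  have Uperp: "u ` I \<subseteq> perp n S"
  proof
    fix w assume "w \<in> u ` I"
    then obtain l where l: "l \<in> I" and w: "w = u l" by blast
    show "w \<in> perp n S" unfolding perp_def w
    proof (intro CollectI conjI ballI)
      show "u l \<in> carrier_vec n" by (rule uC[OF l])
      fix y assume y: "y \<in> S"
      show "u l \<bullet>c y = 0" unfolding u_def by (rule proj_orth[OF S xC[OF l] y])
    qed
  qed
  have "card (u ` I) \<le> cdim n (perp n S)" by (rule li_le_cdim(2)[OF perp_sub[OF SC] Uperp liU])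
  moreover have "card (u ` I) = p + 1" using card_image[OF injU] unfolding I_def by simp
  ultimately show False unfolding p_def by simp
qed

end
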